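(* Let $K$ be a commutative Noetherian ring with $1$ and let $X$ be a finite set. Every right ideal $R$ of the free $K$-algebra $K\langle X\rangle$ such that $K\langle X\rangle/R$ is a finitely generated $K$-module is finitely presented as a $K$-algebra.
   Context: The free $K$-algebra $K\langle X\rangle$ is the semigroup ring over $K$ of the free semigroup $X^+$ (polynomials in non-commuting variables from $X$ without constant term; no identity). A $K$-algebra is finitely presented if it is isomorphic to $K\langle Y\rangle/I$ with $Y$ finite and $I$ an ideal of $K\langle Y\rangle$ finitely generated as an ideal. *)

theory Defs
  imports Main
begin

definition ring_ideal :: "'k::comm_ring_1 set \<Rightarrow> bool" where
  "ring_ideal I \<longleftrightarrow> 0 \<in> I \<and> (\<forall>a\<in>I. \<forall>b\<in>I. a + b \<in> I) \<and> (\<forall>r. \<forall>a\<in>I. r * a \<in> I)"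

definition noetherian_ring :: "'k::comm_ring_1 itself \<Rightarrow> bool" where
  "noetherian_ring _ \<longleftrightarrow>
     (\<forall>I::'k set. ring_ideal I \<longrightarrow>
        (\<exists>G. finite G \<and> G \<subseteq> I \<and> I = {\<Sum>g\<in>G. c g * g | c. True}))"

text \<open>Elements of K<X> are finitely supported functions from words to K,
  supported on nonempty words over the alphabet X (no constant term).\<close>

definition free_alg :: "'x set \<Rightarrow> ('x list \<Rightarrow> 'k::comm_ring_1) set" where
  "free_alg X = {p. finite {w. p w \<noteq> 0} \<and> (\<forall>w. p w \<noteq> 0 \<longrightarrow> w \<noteq> [] \<and> set w \<subseteq> X)}"

definition fa_mult :: "('x list \<Rightarrow> 'k::comm_ring_1) \<Rightarrow> ('x list \<Rightarrow> 'k) \<Rightarrow> ('x list \<Rightarrow> 'k)" where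
  "fa_mult p q = (\<lambda>w. \<Sum>i\<in>{0..length w}. p (take i w) * q (drop i w))"

definition fa_smult :: "'k::comm_ring_1 \<Rightarrow> ('x list \<Rightarrow> 'k) \<Rightarrow> ('x list \<Rightarrow> 'k)" where
  "fa_smult c p = (\<lambda>w. c * p w)"

text \<open>Addition, subtraction and zero are pointwise.\<close>

definition right_ideal :: "'x set \<Rightarrow> ('x list \<Rightarrow> 'k::comm_ring_1) set \<Rightarrow> bool" where
  "right_ideal X R \<longleftrightarrow> R \<subseteq> free_alg X \<and> (\<lambda>_. 0) \<in> R \<and>
     (\<forall>a\<in>R. \<forall>b\<in>R. (\<lambda>w. a w + b w) \<in> R) \<and> (\<forall>c. \<forall>a\<in>R. fa_smult c a \<in> R) \<and>
     (\<forall>a\<in>R. \<forall>p\<in>free_alg X. fa_mult a p \<in> R)"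

definition two_sided_ideal :: "'x set \<Rightarrow> ('x list \<Rightarrow> 'k::comm_ring_1) set \<Rightarrow> bool" where
  "two_sided_ideal X I \<longleftrightarrow> I \<subseteq> free_alg X \<and> (\<lambda>_. 0) \<in> I \<and>
     (\<forall>a\<in>I. \<forall>b\<in>I. (\<lambda>w. a w + b w) \<in> I) \<and> (\<forall>c. \<forall>a\<in>I. fa_smult c a \<in> I) \<and>
     (\<forall>a\<in>I. \<forall>p\<in>free_alg X. fa_mult a p \<in> I \<and> fa_mult p a \<in> I)"

definition ideal_generated :: "'x set \<Rightarrow> ('x list \<Rightarrow> 'k::comm_ring_1) set \<Rightarrow> ('x list \<Rightarrow> 'k) set" where
  "ideal_generated X G = \<Inter>{I. two_sided_ideal X I \<and> G \<subseteq> I}"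

definition quotient_fg_module :: "'x set \<Rightarrow> ('x list \<Rightarrow> 'k::comm_ring_1) set \<Rightarrow> bool" where
  "quotient_fg_module X R \<longleftrightarrow>
     (\<exists>F. finite F \<and> F \<subseteq> free_alg X \<and>
        (\<forall>p\<in>free_alg X. \<exists>c. (\<lambda>w. p w - (\<Sum>f\<in>F. c f * f w)) \<in> R))"

definition alg_hom_onto :: "nat set \<Rightarrow> 'x set \<Rightarrow> ('x list \<Rightarrow> 'k::comm_ring_1) set
      \<Rightarrow> ((nat list \<Rightarrow> 'k) \<Rightarrow> ('x list \<Rightarrow> 'k)) \<Rightarrow> bool" where
  "alg_hom_onto Y X A \<phi> \<longleftrightarrow>
     \<phi> ` free_alg Y = A \<and>
     (\<forall>p\<in>free_alg Y. \<forall>q\<in>free_alg Y. \<phi> (\<lambda>w. p w + q w) = (\<lambda>w. \<phi> p w + \<phi> q w) \<and> \<phi> (fa_mult p q) = fa_mult (\<phi> p) (\<phi> q)) \<and>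
     (\<forall>c. \<forall>p\<in>free_alg Y. \<phi> (fa_smult c p) = fa_smult c (\<phi> p))"

text \<open>A subalgebra A of K<X> is finitely presented as a K-algebra iff it is isomorphic to
  K<Y>/I with Y finite and I a finitely generated ideal; equivalently (first isomorphism
  theorem) there is a surjective K-algebra homomorphism K<Y> \<rightarrow> A whose kernel is a
  finitely generated ideal. Y is taken as a finite set of naturals (any finite set is in
  bijection with one).\<close>
definition finitely_presented_sub :: "'x set \<Rightarrow> ('x list \<Rightarrow> 'k::comm_ring_1) set \<Rightarrow> bool" where
  "finitely_presented_sub X A \<longleftrightarrow>
     (\<exists>(Y::nat set) \<phi> G. finite Y \<and> alg_hom_onto Y X A \<phi> \<and> finite G \<and> G \<subseteq> free_alg Y \<and>
        {p\<in>free_alg Y. \<phi> p = (\<lambda>_. 0)} = ideal_generated Y G)"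

end

theory Submission
  imports Defs "HOL-Library.Poly_Mapping"
begin

instantiation list :: (type) monoid_add
begin
definition zero_list :: "'a list" where "zero_list = []"
definition plus_list :: "'a list \<Rightarrow> 'a list \<Rightarrow> 'a list" where "plus_list xs ys = xs @ ys"
instance by standard (auto simp: zero_list_def plus_list_def)
end

lemma lookup_mult_fin:
  "Poly_Mapping.lookup (p*q) w = (\<Sum>a\<in>Poly_Mapping.keys p. \<Sum>b\<in>Poly_Mapping.keys q.
      if a + b = w then Poly_Mapping.lookup p a * Poly_Mapping.lookup q b else (0::'k::semiring_0))"
proof -
  have "Poly_Mapping.lookup (p*q) w = (\<Sum>a. Poly_Mapping.lookup p a * (\<Sum>b. Poly_Mapping.lookup q b when w = a + b))"
    by (rule lookup_mult)
  also have "\<dots> = (\<Sum>a\<in>Poly_Mapping.keys p. Poly_Mapping.lookup p a * (\<Sum>b\<in>Poly_Mapping.keys q. Poly_Mapping.lookup q b when w = a + b))"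
    apply (subst Sum_any.expand_superset[of "Poly_Mapping.keys p"])
      apply (auto simp: in_keys_iff)
    apply (rule sum.cong, simp)
    apply (subst Sum_any.expand_superset[of "Poly_Mapping.keys q"])
      apply (auto simp: in_keys_iff when_def)
    done
  also have "\<dots> = (\<Sum>a\<in>Poly_Mapping.keys p. \<Sum>b\<in>Poly_Mapping.keys q.
      if a + b = w then Poly_Mapping.lookup p a * Poly_Mapping.lookup q b else 0)"
    by (auto simp: sum_distrib_left when_def intro!: sum.cong)
  finally show ?thesis .
qed

abbreviation lk where "lk \<equiv> Poly_Mapping.lookup"
abbreviation ks where "ks \<equiv> Poly_Mapping.keys"

type_synonym ('a,'k) pm = "'a list \<Rightarrow>\<^sub>0 'k"

definition sm :: "'k::comm_ring_1 \<Rightarrow> ('a,'k) pm \<Rightarrow> ('a,'k) pm" where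
  "sm c p = Poly_Mapping.map ((*) c) p"

lemma lookup_sm [simp]: "lk (sm c p) w = c * lk p w"
  by (simp add: sm_def map.rep_eq when_def)

lemma sm_single: "sm c p = Poly_Mapping.single 0 c * p"
  by (simp add: sm_def mult_map_scale_conv_mult)

lemma single0_comm: "p * Poly_Mapping.single 0 c = Poly_Mapping.single 0 c * (p::('a,'k::comm_ring_1) pm)"
  by (rule poly_mapping_eqI) (simp add: lookup_mult_fin lookup_single when_def mult.commute)

lemma sm_mult_left: "sm c (p * q) = sm c p * q"
  by (simp add: sm_single mult.assoc)

lemma sm_mult_right: "p * sm c q = sm c (p * q)"
  by (simp add: sm_single mult.assoc[symmetric] single0_comm)

lemma sm_add: "sm c (p + q) = sm c p + sm c q"
  by (rule poly_mapping_eqI) (simp add: lookup_add algebra_simps)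
lemma sm_add2: "sm (c + d) p = sm c p + sm d p"
  by (rule poly_mapping_eqI) (simp add: lookup_add algebra_simps)
lemma sm_diff: "sm c (p - q) = sm c p - sm c q"
  by (rule poly_mapping_eqI) (simp add: lookup_minus algebra_simps)
lemma sm_minus: "sm c (- q) = - sm c q"
  by (rule poly_mapping_eqI) (simp add: algebra_simps)
lemma sm_minus2: "sm (-c) q = - sm c q"
  by (rule poly_mapping_eqI) (simp add: algebra_simps)
lemma sm_sm: "sm c (sm d p) = sm (c*d) p"
  by (rule poly_mapping_eqI) (simp add: algebra_simps)
lemma sm_1 [simp]: "sm 1 p = p"
  by (rule poly_mapping_eqI) simp
lemma sm_0 [simp]: "sm 0 p = 0"
  by (rule poly_mapping_eqI) simp
lemma sm_zero [simp]: "sm c 0 = 0"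
  by (rule poly_mapping_eqI) simp
lemma sm_sum: "sm c (sum f S) = (\<Sum>x\<in>S. sm c (f x))"
  by (rule poly_mapping_eqI) (simp add: lookup_sum sum_distrib_left)
lemma keys_sm: "ks (sm c p) \<subseteq> ks p"
  by (auto simp: in_keys_iff)

definition wd :: "'a list \<Rightarrow> ('a,'k::comm_ring_1) pm" where
  "wd w = Poly_Mapping.single w 1"

lemma wd_append: "wd (a @ b) = wd a * wd b"
  by (simp add: wd_def mult_single plus_list_def)

lemma keys_wd [simp]: "ks (wd w :: ('a,'k::comm_ring_1) pm) = {w}"
  by (simp add: wd_def)

lemma lookup_wd: "lk (wd w) v = (if v = w then 1 else 0)"
  by (simp add: wd_def lookup_single when_def)

definition ext :: "('a list \<Rightarrow> ('b,'k) pm) \<Rightarrow> ('a,'k::comm_ring_1) pm \<Rightarrow> ('b,'k) pm" where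
  "ext f p = (\<Sum>b\<in>ks p. sm (lk p b) (f b))"

lemma ext_superset: "finite S \<Longrightarrow> ks p \<subseteq> S \<Longrightarrow> ext f p = (\<Sum>b\<in>S. sm (lk p b) (f b))"
  unfolding ext_def by (rule sum.mono_neutral_left) (auto simp: in_keys_iff)

lemma ext_zero [simp]: "ext f 0 = 0"
  by (simp add: ext_def)

lemma ext_add: "ext f (p + q) = ext f p + ext f q"
proof -
  let ?S = "ks p \<union> ks q"
  have "ext f (p+q) = (\<Sum>b\<in>?S. sm (lk (p+q) b) (f b))"
    by (rule ext_superset) (auto simp: keys_add)
  also have "\<dots> = (\<Sum>b\<in>?S. sm (lk p b) (f b)) + (\<Sum>b\<in>?S. sm (lk q b) (f b))"
    by (simp add: lookup_add sm_add2 sum.distrib)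
  also have "\<dots> = ext f p + ext f q"
  proof -
    have "ext f p = (\<Sum>b\<in>?S. sm (lk p b) (f b))" "ext f q = (\<Sum>b\<in>?S. sm (lk q b) (f b))"
      by (rule ext_superset, auto)+
    then show ?thesis by simp
  qed
  finally show ?thesis .
qed

lemma ext_sm: "ext f (sm c p) = sm c (ext f p)"
proof -
  have "ext f (sm c p) = (\<Sum>b\<in>ks p. sm (lk (sm c p) b) (f b))"
    by (rule ext_superset) (auto simp: keys_sm)
  then show ?thesis by (simp add: ext_def sm_sum sm_sm)
qed

lemma ext_minus: "ext f (- p) = - ext f p"
  using ext_sm[of f "-1" p] by (simp add: sm_minus2)

lemma ext_diff: "ext f (p - q) = ext f p - ext f q"
  using ext_add[of f p "-q"] by (simp add: ext_minus)

lemma ext_sum: "ext f (sum g S) = (\<Sum>x\<in>S. ext f (g x))"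
  by (induction S rule: infinite_finite_induct) (auto simp: ext_add)

lemma ext_single: "ext f (Poly_Mapping.single w c) = sm c (f w)"
  by (cases "c = 0") (auto simp: ext_def)

lemma ext_wd_single: "ext f (wd w) = f w"
  by (simp add: wd_def ext_single)

lemma ext_cong: "(\<And>b. b \<in> ks p \<Longrightarrow> f b = g b) \<Longrightarrow> ext f p = ext g p"
  by (simp add: ext_def)

lemma lookup_ext: "lk (ext f p) w = (\<Sum>b\<in>ks p. lk p b * lk (f b) w)"
  by (simp add: ext_def lookup_sum)

lemma keys_ext: "ks (ext f p) \<subseteq> (\<Union>b\<in>ks p. ks (f b))"
proof
  fix w assume "w \<in> ks (ext f p)"
  then have "(\<Sum>b\<in>ks p. lk p b * lk (f b) w) \<noteq> 0" by (simp add: lookup_ext in_keys_iff)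
  then obtain b where "b \<in> ks p" "lk p b * lk (f b) w \<noteq> 0"
    by (meson sum.not_neutral_contains_not_neutral)
  then show "w \<in> (\<Union>b\<in>ks p. ks (f b))" by (intro UN_I[of b]) (auto simp: in_keys_iff)
qed

lemma ext_wd: "ext wd p = p"
  by (rule poly_mapping_eqI) (auto simp: lookup_ext lookup_wd in_keys_iff if_distrib cong: if_cong)

lemma ext_add_fun: "ext (\<lambda>b. f b + g b) p = ext f p + ext g p"
  by (simp add: ext_def sm_add sum.distrib)

lemma ext_sm_fun: "ext (\<lambda>b. sm c (f b)) p = sm c (ext f p)"
  by (simp add: ext_def sm_sm sm_sum mult.commute)

lemma ext_mult_right: "ext f p * q = ext (\<lambda>b. f b * q) p"
  by (simp add: ext_def sum_distrib_right sm_mult_left)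

lemma ext_mult_left: "q * ext f p = ext (\<lambda>b. q * f b) p"
  by (simp add: ext_def sum_distrib_left sm_mult_right)

lemma ext_ext: "ext g (ext f p) = ext (\<lambda>b. ext g (f b)) p"
  by (simp only: ext_def[of f p] ext_def[of "\<lambda>b. ext g (f b)" p] ext_sum ext_sm)

lemma ext_linear_fun:
  assumes "\<And>x y. h (x + y) = h x + h y" "\<And>c x. h (sm c x) = sm c (h x)"
  shows "h (ext f p) = ext (\<lambda>b. h (f b)) p"
proof -
  have h0: "h 0 = 0" using assms(2)[of 0 0] by simp
  have hs: "h (sum g S) = (\<Sum>x\<in>S. h (g x))" for g and S :: "'z set"
    by (induction S rule: infinite_finite_induct) (auto simp: assms h0)
  show ?thesis unfolding ext_def hs assms ..
qed

lemma ext_mult: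
  assumes "\<And>a b. F (a @ b) = F a * F b"
  shows "ext F (p * q) = ext F p * ext F q"
proof -
  have "p * q = ext wd p * ext wd q" by (simp add: ext_wd)
  also have "\<dots> = ext (\<lambda>a. wd a * ext wd q) p" by (rule ext_mult_right)
  also have "\<dots> = ext (\<lambda>a. ext (\<lambda>b. wd (a @ b)) q) p"
    by (simp add: ext_mult_left wd_append)
  finally have 1: "p * q = ext (\<lambda>a. ext (\<lambda>b. wd (a @ b)) q) p" .
  have "ext F (p * q) = ext (\<lambda>a. ext (\<lambda>b. F a * F b) q) p"
    unfolding 1 ext_ext by (simp add: ext_wd_single assms)
  also have "\<dots> = ext (\<lambda>a. F a * ext F q) p"
    by (simp add: ext_mult_left)
  also have "\<dots> = ext F p * ext F q"
    by (simp add: ext_mult_right)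
  finally show ?thesis .
qed

definition span :: "('a,'k::comm_ring_1) pm set \<Rightarrow> ('a,'k) pm set" where
  "span B = {p. \<exists>c. p = (\<Sum>b\<in>B. sm (c b) b)}"

lemma span_0: "0 \<in> span B"
  unfolding span_def by (rule CollectI, rule exI[of _ "\<lambda>_. 0"]) simp

lemma span_add: "x \<in> span B \<Longrightarrow> y \<in> span B \<Longrightarrow> x + y \<in> span B"
  unfolding span_def
  apply clarify
  subgoal for c d by (rule exI[of _ "\<lambda>b. c b + d b"]) (simp add: sm_add2 sum.distrib)
  done

lemma span_sm: "x \<in> span B \<Longrightarrow> sm a x \<in> span B"
  unfolding span_def
  apply clarify
  subgoal for c by (rule exI[of _ "\<lambda>b. a * c b"]) (simp add: sm_sum sm_sm)
  done

lemma span_minus: "x \<in> span B \<Longrightarrow> - x \<in> span B"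
  using span_sm[of x B "-1"] by (simp add: sm_minus2)

lemma span_diff: "x \<in> span B \<Longrightarrow> y \<in> span B \<Longrightarrow> x - y \<in> span B"
  using span_add[OF _ span_minus] by (metis diff_conv_add_uminus)

lemma span_sum: "(\<And>i. i \<in> S \<Longrightarrow> f i \<in> span B) \<Longrightarrow> sum f S \<in> span B"
  by (induction S rule: infinite_finite_induct) (auto simp: span_0 span_add)

lemma span_base: "finite B \<Longrightarrow> b \<in> B \<Longrightarrow> b \<in> span B"
  unfolding span_def
proof (rule CollectI, rule exI[of _ "\<lambda>x. if x = b then 1 else 0"])
  assume "finite B" "b \<in> B"
  have "(\<Sum>x\<in>B. sm (if x = b then 1 else 0) x) = (\<Sum>x\<in>B. if x = b then b else 0)"
    by (rule sum.cong) auto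
  also have "\<dots> = b" using \<open>finite B\<close> \<open>b \<in> B\<close> by (simp add: sum.delta)
  finally show "b = (\<Sum>x\<in>B. sm (if x = b then 1 else 0) x)" by simp
qed

lemma span_mono: "finite B2 \<Longrightarrow> B1 \<subseteq> B2 \<Longrightarrow> span B1 \<subseteq> span B2"
proof
  fix x assume f: "finite B2" and s: "B1 \<subseteq> B2" and "x \<in> span B1"
  then obtain c where "x = (\<Sum>b\<in>B1. sm (c b) b)" unfolding span_def by blast
  also have "\<dots> \<in> span B2"
    by (rule span_sum, rule span_sm, rule span_base) (use f s in auto)
  finally show "x \<in> span B2" .
qed

definition submod :: "('a,'k::comm_ring_1) pm set \<Rightarrow> bool" where
  "submod M \<longleftrightarrow> 0 \<in> M \<and> (\<forall>p\<in>M. \<forall>q\<in>M. p + q \<in> M) \<and> (\<forall>c. \<forall>p\<in>M. sm c p \<in> M)"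

lemma submod_sum: "submod M \<Longrightarrow> (\<And>i. i \<in> S \<Longrightarrow> f i \<in> M) \<Longrightarrow> sum f S \<in> M"
  unfolding submod_def by (induction S rule: infinite_finite_induct) auto

lemma submod_diff: "submod M \<Longrightarrow> p \<in> M \<Longrightarrow> q \<in> M \<Longrightarrow> p - q \<in> M"
  unfolding submod_def by (metis diff_conv_add_uminus sm_1 sm_minus2)

lemma span_subset: "submod M \<Longrightarrow> B \<subseteq> M \<Longrightarrow> span B \<subseteq> M"
proof
  fix x assume M: "submod M" "B \<subseteq> M" and "x \<in> span B"
  then obtain c where "x = (\<Sum>b\<in>B. sm (c b) b)" unfolding span_def by blast
  also have "\<dots> \<in> M" by (rule submod_sum[OF M(1)]) (use M in \<open>auto simp: submod_def\<close>)
  finally show "x \<in> M" .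
qed

lemma noeth_module:
  assumes noeth: "noetherian_ring TYPE('k::comm_ring_1)" and fin: "finite S"
  shows "submod M \<Longrightarrow> M \<subseteq> {p::('a,'k) pm. ks p \<subseteq> S} \<Longrightarrow> \<exists>B. finite B \<and> B \<subseteq> M \<and> M = span B"
  using fin
proof (induction S arbitrary: M rule: finite_induct)
  case empty
  then have "M \<subseteq> {0}" by auto
  then have "M = {0}" using empty.prems(1) by (auto simp: submod_def)
  then show ?case by (intro exI[of _ "{}"]) (auto simp: span_def)
next
  case (insert a S M)
  define I where "I = (\<lambda>p. lk p a) ` M"
  have "ring_ideal I"
    unfolding ring_ideal_def I_def
  proof (intro conjI ballI allI)
    show "0 \<in> (\<lambda>p. lk p a) ` M" using insert.prems by (force simp: submod_def)
  next
    fix x y assume "x \<in> (\<lambda>p. lk p a) ` M" "y \<in> (\<lambda>p. lk p a) ` M"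
    then obtain p q where "p \<in> M" "q \<in> M" "x = lk p a" "y = lk q a" by blast
    then show "x + y \<in> (\<lambda>p. lk p a) ` M" using insert.prems(1)
      by (intro image_eqI[of _ _ "p + q"]) (auto simp: submod_def lookup_add)
  next
    fix r x assume "x \<in> (\<lambda>p. lk p a) ` M"
    then obtain p where "p \<in> M" "x = lk p a" by blast
    then show "r * x \<in> (\<lambda>p. lk p a) ` M" using insert.prems(1)
      by (intro image_eqI[of _ _ "sm r p"]) (auto simp: submod_def)
  qed
  then obtain G where G: "finite G" "G \<subseteq> I" "I = {\<Sum>g\<in>G. c g * g | c. True}"
    using noeth[unfolded noetherian_ring_def, rule_format, OF \<open>ring_ideal I\<close>] by auto
  have "\<forall>g\<in>G. \<exists>p\<in>M. lk p a = g" using G(2) by (auto simp: I_def)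
  then obtain pre where pre: "\<And>g. g \<in> G \<Longrightarrow> pre g \<in> M \<and> lk (pre g) a = g" by metis
  define M' where "M' = {p\<in>M. lk p a = 0}"
  have "submod M'" using insert.prems unfolding M'_def submod_def by (auto simp: lookup_add)
  moreover have "M' \<subseteq> {p. ks p \<subseteq> S}" using insert.prems unfolding M'_def by (auto simp: in_keys_iff)
  ultimately obtain B' where B': "finite B'" "B' \<subseteq> M'" "M' = span B'" using insert.IH by meson
  define B where "B = pre ` G \<union> B'"
  have finB: "finite B" using B' G by (simp add: B_def)
  have BM: "B \<subseteq> M" using B' pre unfolding B_def M'_def by auto
  have "M \<subseteq> span B"
  proof
    fix p assume p: "p \<in> M"
    then have "lk p a \<in> I" by (simp add: I_def)
    then obtain c where c: "lk p a = (\<Sum>g\<in>G. c g * g)" using G(3) by blast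
    define x where "x = (\<Sum>g\<in>G. sm (c g) (pre g))"
    have xM: "x \<in> M" unfolding x_def
      by (rule submod_sum[OF insert.prems(1)]) (use insert.prems(1) pre in \<open>auto simp: submod_def\<close>)
    have xs: "x \<in> span B" unfolding x_def
      by (rule span_sum, rule span_sm, rule span_base[OF finB]) (auto simp: B_def)
    have "p - x \<in> M'" unfolding M'_def
      using submod_diff[OF insert.prems(1) p xM] by (simp add: lookup_minus x_def lookup_sum c pre)
    then have "p - x \<in> span B" using B' span_mono[OF finB, of B'] by (auto simp: B_def)
    then have "(p - x) + x \<in> span B" using xs span_add by blast
    then show "p \<in> span B" by simp
  qed
  moreover have "span B \<subseteq> M" using span_subset[OF insert.prems(1) BM] .
  ultimately show ?case using finB BM by blast
qed

definition kp :: "('a list \<Rightarrow> bool) \<Rightarrow> ('a,'k::comm_ring_1) pm \<Rightarrow> bool" where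
  "kp Q p \<longleftrightarrow> (\<forall>m\<in>ks p. Q m)"

lemma kp_0 [simp]: "kp Q 0" by (simp add: kp_def)
lemma kp_add: "kp Q p \<Longrightarrow> kp Q q \<Longrightarrow> kp Q (p + q)"
  using keys_add[of p q] by (auto simp: kp_def)
lemma kp_minus: "kp Q p \<Longrightarrow> kp Q (- p)"
  by (simp add: kp_def)
lemma kp_diff: "kp Q p \<Longrightarrow> kp Q q \<Longrightarrow> kp Q (p - q)"
  using keys_diff[of p q] by (auto simp: kp_def)
lemma kp_sm: "kp Q p \<Longrightarrow> kp Q (sm c p)"
  using keys_sm[of c p] by (auto simp: kp_def)
lemma kp_sum: "(\<And>i. i \<in> S \<Longrightarrow> kp Q (f i)) \<Longrightarrow> kp Q (sum f S)"
  by (induction S rule: infinite_finite_induct) (auto simp: kp_add)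
lemma kp_ext: "(\<And>b. b \<in> ks p \<Longrightarrow> kp Q (f b)) \<Longrightarrow> kp Q (ext f p)"
  unfolding ext_def by (rule kp_sum) (auto intro: kp_sm)
lemma kp_mono: "kp Q p \<Longrightarrow> (\<And>m. Q m \<Longrightarrow> Q' m) \<Longrightarrow> kp Q' p"
  by (auto simp: kp_def)
lemma kp_wd: "kp Q (wd w :: ('a,'k::comm_ring_1) pm) \<longleftrightarrow> Q w"
  by (simp add: kp_def)
lemma kp_submod: "submod {p::('a,'k::comm_ring_1) pm. kp Q p}"
  by (auto simp: submod_def kp_add kp_sm)

definition WX :: "'a set \<Rightarrow> 'a list set" where
  "WX X = {w. w \<noteq> [] \<and> set w \<subseteq> X}"

abbreviation FA :: "'a set \<Rightarrow> ('a,'k::comm_ring_1) pm \<Rightarrow> bool" where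
  "FA X \<equiv> kp (\<lambda>m. m \<in> WX X)"

abbreviation degle :: "('a,'k::comm_ring_1) pm \<Rightarrow> nat \<Rightarrow> bool" where
  "degle p d \<equiv> kp (\<lambda>m. length m \<le> d) p"

lemma FA_mult: "FA X p \<Longrightarrow> FA X q \<Longrightarrow> FA X (p * q)"
  using keys_mult[of p q] by (fastforce simp: kp_def WX_def plus_list_def)

lemma degle_mult: "degle p d1 \<Longrightarrow> degle q d2 \<Longrightarrow> degle (p * q) (d1 + d2)"
  using keys_mult[of p q] by (fastforce simp: kp_def plus_list_def)

lemma degle_mono: "degle p d1 \<Longrightarrow> d1 \<le> d2 \<Longrightarrow> degle p d2"
  by (auto simp: kp_def)

lemma WX_append: "v \<in> WX X \<Longrightarrow> u \<in> WX X \<Longrightarrow> v @ u \<in> WX X"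
  by (auto simp: WX_def)

lemma finite_words: "finite X \<Longrightarrow> finite {w. set w \<subseteq> X \<and> length w \<le> n}"
  by (rule finite_lists_length_le)

lemma finite_WX_le: "finite X \<Longrightarrow> finite {w. w \<in> WX X \<and> length w \<le> n}"
  by (rule finite_subset[OF _ finite_words[of X n]]) (auto simp: WX_def)

lemma ext_diff_fun: "ext (\<lambda>b. f b - g b) p = ext f p - ext g p"
  using ext_add_fun[of f "\<lambda>b. - g b" p] ext_sm_fun[of "-1" g p]
  by (simp add: sm_minus2)

lemma ext_zero_fun: "ext (\<lambda>b. 0) p = 0"
  by (simp add: ext_def)

locale constr =
  fixes X :: "'a set" and R :: "('a,'k::comm_ring_1) pm set" and D :: nat
    and rho :: "'a list \<Rightarrow> ('a,'k) pm"
  assumes noeth: "noetherian_ring TYPE('k)"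
    and finX: "finite X"
    and R_FA: "\<And>p. p \<in> R \<Longrightarrow> FA X p"
    and R_sub: "submod R"
    and R_mult: "\<And>p q. p \<in> R \<Longrightarrow> FA X q \<Longrightarrow> p * q \<in> R"
    and rho_FA: "\<And>w. w \<in> WX X \<Longrightarrow> FA X (rho w)"
    and rho_deg: "\<And>w. w \<in> WX X \<Longrightarrow> degle (rho w) D"
    and rho_R: "\<And>w. w \<in> WX X \<Longrightarrow> wd w - rho w \<in> R"
begin

lemma R_add: "p \<in> R \<Longrightarrow> q \<in> R \<Longrightarrow> p + q \<in> R"
  using R_sub by (simp add: submod_def)
lemma R_sm: "p \<in> R \<Longrightarrow> sm c p \<in> R"
  using R_sub by (simp add: submod_def)
lemma R_0: "0 \<in> R"
  using R_sub by (simp add: submod_def)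
lemma R_diff: "p \<in> R \<Longrightarrow> q \<in> R \<Longrightarrow> p - q \<in> R"
  using R_sub by (rule submod_diff)
lemma R_mult2: "p \<in> R \<Longrightarrow> q \<in> R \<Longrightarrow> p * q \<in> R"
  using R_mult R_FA by blast
lemma R_ext: "(\<And>b. b \<in> ks p \<Longrightarrow> f b \<in> R) \<Longrightarrow> ext f p \<in> R"
  unfolding ext_def by (rule submod_sum[OF R_sub]) (auto intro: R_sm)
lemma R_sum: "(\<And>i. i \<in> S \<Longrightarrow> f i \<in> R) \<Longrightarrow> sum f S \<in> R"
  by (rule submod_sum[OF R_sub])

definition "E = 2 * D + 1"

definition rr :: "'a list \<Rightarrow> ('a,'k) pm" where "rr w = wd w - rho w"

lemma rr_R: "w \<in> WX X \<Longrightarrow> rr w \<in> R"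
  by (simp add: rr_def rho_R)

lemma rho_keys: "w \<in> WX X \<Longrightarrow> t \<in> ks (rho w) \<Longrightarrow> t \<in> WX X \<and> length t \<le> D"
  using rho_FA[of w] rho_deg[of w] by (auto simp: kp_def)

definition "RE = {r\<in>R. degle r E}"

lemma RE_submod: "submod RE"
  using R_sub unfolding RE_def submod_def by (auto intro: kp_add kp_sm)

lemma RE_keys: "RE \<subseteq> {p. ks p \<subseteq> {w. set w \<subseteq> X \<and> length w \<le> E}}"
  unfolding RE_def using R_FA by (auto simp: kp_def WX_def)

definition "BB = (SOME B. finite B \<and> B \<subseteq> RE \<and> RE = span B)"

lemma BB: "finite BB" "BB \<subseteq> RE" "RE = span BB"
proof -
  have "\<exists>B. finite B \<and> B \<subseteq> RE \<and> RE = span B"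
    by (rule noeth_module[OF noeth finite_words[OF finX] RE_submod RE_keys])
  then show "finite BB" "BB \<subseteq> RE" "RE = span BB"
    unfolding BB_def by (metis (mono_tags, lifting) someI_ex)+
qed

definition "gs = (SOME xs. set xs = BB \<and> distinct xs)"

lemma gs: "set gs = BB" "distinct gs"
  using someI_ex[OF finite_distinct_list[OF BB(1)]] unfolding gs_def by auto

definition "n = length gs"
definition gen :: "nat \<Rightarrow> ('a,'k) pm" where "gen i = gs ! i"

lemma gen_RE: "i < n \<Longrightarrow> gen i \<in> RE"
  using BB(2) gs(1) by (auto simp: gen_def n_def)

lemma gen_R: "i < n \<Longrightarrow> gen i \<in> R"
  using gen_RE by (simp add: RE_def)

definition phi :: "(nat,'k) pm \<Rightarrow> ('a,'k) pm" where
  "phi = ext (\<lambda>m. prod_list (map gen m))"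

lemma phi_add: "phi (p + q) = phi p + phi q" by (simp add: phi_def ext_add)
lemma phi_sm: "phi (sm c p) = sm c (phi p)" by (simp add: phi_def ext_sm)
lemma phi_diff: "phi (p - q) = phi p - phi q" by (simp add: phi_def ext_diff)
lemma phi_0: "phi 0 = 0" by (simp add: phi_def)
lemma phi_mult: "phi (p * q) = phi p * phi q"
  unfolding phi_def by (rule ext_mult) simp
lemma phi_wd: "phi (wd m) = prod_list (map gen m)"
  by (simp add: phi_def ext_wd_single)
lemma phi_ext: "phi (ext f p) = ext (\<lambda>b. phi (f b)) p"
  by (rule ext_linear_fun) (simp_all add: phi_add phi_sm)
lemma phi_sum: "phi (sum f S) = (\<Sum>i\<in>S. phi (f i))"
  by (induction S rule: infinite_finite_induct) (auto simp: phi_add phi_0)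

abbreviation "FY \<equiv> FA {..<n}"

definition "LL = span ((\<lambda>i. wd [i]) ` {..<n})"

lemma LL_kp: assumes "\<And>i. i < n \<Longrightarrow> Q [i]" "l \<in> LL" shows "kp Q l"
proof -
  have "LL \<subseteq> {p. kp Q p}" unfolding LL_def
    by (rule span_subset[OF kp_submod]) (auto simp: kp_wd assms)
  then show ?thesis using assms by blast
qed

lemma LL_FY: "l \<in> LL \<Longrightarrow> FY l"
  by (rule LL_kp) (auto simp: WX_def)

lemma LL_deg: "l \<in> LL \<Longrightarrow> degle l 1"
  by (rule LL_kp) auto

lemma LL_submod: "submod LL"
  unfolding LL_def submod_def by (auto intro: span_0 span_add span_sm)

lemma exists_lin: assumes "h \<in> RE" shows "\<exists>l\<in>LL. phi l = h"
proof -
  obtain c where c: "h = (\<Sum>b\<in>BB. sm (c b) b)" using assms BB(3) by (auto simp: span_def)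
  define l where "l = (\<Sum>i<n. sm (c (gs ! i)) (wd [i]))"
  have "l \<in> LL" unfolding l_def LL_def
    by (rule span_sum, rule span_sm, rule span_base) auto
  moreover have "phi l = h"
  proof -
    have "phi l = (\<Sum>i<n. sm (c (gs ! i)) (gs ! i))"
      by (simp add: l_def phi_sum phi_sm phi_wd gen_def)
    also have "\<dots> = (\<Sum>b\<in>BB. sm (c b) b)"
      using sum.reindex_bij_betw[OF bij_betw_nth[OF gs(2) refl refl], of "\<lambda>b. sm (c b) b"]
      by (simp add: n_def gs(1))
    finally show ?thesis using c by simp
  qed
  ultimately show ?thesis by blast
qed

definition lin :: "('a,'k) pm \<Rightarrow> (nat,'k) pm" where
  "lin h = (SOME l. l \<in> LL \<and> phi l = h)"

lemma lin: assumes "h \<in> RE" shows "lin h \<in> LL" "phi (lin h) = h"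
  using someI_ex[of "\<lambda>l. l \<in> LL \<and> phi l = h"] exists_lin[OF assms] unfolding lin_def by auto

definition lam :: "'a list \<Rightarrow> 'a list \<Rightarrow> ('a,'k) pm" where
  "lam v u = rr (v @ u) - rr v * rr u - ext (\<lambda>t. rr (v @ t)) (rho u)"

lemma lam_eq: "lam v u = - rho (v @ u) + rho v * wd u - rho v * rho u + ext (\<lambda>t. rho (v @ t)) (rho u)"
proof -
  have "ext (\<lambda>t. rr (v @ t)) (rho u) = ext (\<lambda>t. wd v * wd t) (rho u) - ext (\<lambda>t. rho (v @ t)) (rho u)"
    by (simp add: rr_def wd_append ext_diff_fun)
  also have "ext (\<lambda>t. wd v * wd t) (rho u) = wd v * rho u"
    by (simp add: ext_mult_left[symmetric] ext_wd)
  finally show ?thesis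
    by (simp add: lam_def rr_def wd_append algebra_simps)
qed

lemma lam_RE: assumes "v \<in> WX X" "u \<in> WX X" "length u = D + 1" shows "lam v u \<in> RE"
proof -
  have "lam v u \<in> R"
    unfolding lam_def using assms
    by (intro R_diff R_mult2 rr_R R_ext WX_append) (auto dest: rho_keys)
  moreover have "degle (lam v u) E"
  proof -
    have vu: "v @ u \<in> WX X" using assms(1,2) by (rule WX_append)
    have 1: "degle (rho (v @ u)) E" using rho_deg[OF vu] by (rule degle_mono) (simp add: E_def)
    have 2: "degle (rho v * wd u) E"
      using degle_mult[of D "rho v" "D+1" "wd u"] rho_deg[OF assms(1)] assms(3)
      by (simp add: kp_wd E_def mult_2)
    have 3: "degle (rho v * rho u) E"
      using degle_mult[of D "rho v" D "rho u"] rho_deg[OF assms(1)] rho_deg[OF assms(2)]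
      by (auto simp: E_def elim: degle_mono)
    have 4: "degle (ext (\<lambda>t. rho (v @ t)) (rho u)) E"
      by (rule kp_ext, rule degle_mono[OF rho_deg]) (auto simp: E_def WX_append assms dest: rho_keys[OF assms(2)])
    show ?thesis unfolding lam_eq by (intro kp_add kp_diff kp_minus 1 2 3 4)
  qed
  ultimately show ?thesis by (simp add: RE_def)
qed

end

context constr begin

fun Pf :: "nat \<Rightarrow> 'a list \<Rightarrow> (nat,'k) pm" where
  "Pf 0 w = lin (rr w)"
| "Pf (Suc k) w = (if length w \<le> E then lin (rr w) else
     (let v = take (length w - (D+1)) w; u = drop (length w - (D+1)) w in
      Pf k v * Pf k u + ext (\<lambda>t. Pf k (v @ t)) (rho u) + lin (lam v u)))"

definition P :: "'a list \<Rightarrow> (nat,'k) pm" where "P w = Pf (length w) w"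

lemma Pf_short: "length w \<le> E \<Longrightarrow> Pf k w = lin (rr w)"
  by (cases k) auto

lemma P_short: "length w \<le> E \<Longrightarrow> P w = lin (rr w)"
  by (simp add: P_def Pf_short)

lemma split_facts:
  assumes "w \<in> WX X" "E < length w"
  defines "v \<equiv> take (length w - (D+1)) w" and "u \<equiv> drop (length w - (D+1)) w"
  shows "w = v @ u" "v \<in> WX X" "u \<in> WX X" "length u = D + 1" "length v < length w"
    "length u < length w" "\<And>t. t \<in> ks (rho u) \<Longrightarrow> v @ t \<in> WX X \<and> length (v @ t) < length w"
proof -
  have l: "length w > D + 1 + D" using assms(2) by (simp add: E_def)
  show "w = v @ u" by (simp add: v_def u_def)
  show "v \<in> WX X" "u \<in> WX X" using assms(1) l
    by (auto simp: WX_def v_def u_def dest: in_set_takeD in_set_dropD)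
  show "length u = D + 1" "length v < length w" "length u < length w" using l
    by (auto simp: v_def u_def)
  fix t assume "t \<in> ks (rho u)"
  then have "t \<in> WX X" "length t \<le> D" using rho_keys[OF \<open>u \<in> WX X\<close>] by auto
  then show "v @ t \<in> WX X \<and> length (v @ t) < length w"
    using \<open>v \<in> WX X\<close> l by (auto simp: WX_append v_def)
qed

lemma Pf_stable: "w \<in> WX X \<Longrightarrow> length w \<le> k \<Longrightarrow> Pf k w = P w"
proof (induction "length w" arbitrary: w k rule: less_induct)
  case less
  show ?case
  proof (cases "length w \<le> E")
    case True then show ?thesis by (simp add: Pf_short P_short)
  next
    case False
    define v where "v = take (length w - (D+1)) w"
    define u where "u = drop (length w - (D+1)) w"
    note sf = split_facts[OF less.prems(1), of, folded v_def u_def]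
    have E: "E < length w" using False by simp
    obtain k' where k: "k = Suc k'" using less.prems(2) E by (cases k) auto
    obtain l' where l: "length w = Suc l'" using E by (cases "length w") auto
    have IH: "\<And>x. x \<in> WX X \<Longrightarrow> length x < length w \<Longrightarrow> Pf k' x = Pf l' x"
    proof -
      fix x assume x: "x \<in> WX X" "length x < length w"
      have "Pf k' x = P x" using less.hyps[OF x(2) x(1)] x(2) less.prems(2) k by simp
      moreover have "Pf l' x = P x" using less.hyps[OF x(2) x(1)] x(2) l by simp
      ultimately show "Pf k' x = Pf l' x" by simp
    qed
    have "Pf k w = Pf k' v * Pf k' u + ext (\<lambda>t. Pf k' (v @ t)) (rho u) + lin (lam v u)"
      using False by (simp add: k v_def u_def Let_def)
    also have "\<dots> = Pf l' v * Pf l' u + ext (\<lambda>t. Pf l' (v @ t)) (rho u) + lin (lam v u)"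
      using sf[OF E] IH by (auto intro!: ext_cong)
    also have "\<dots> = P w"
      using False by (simp add: P_def l v_def u_def Let_def)
    finally show ?thesis .
  qed
qed

lemma P_split:
  assumes "v \<in> WX X" "u \<in> WX X" "length u = D + 1" "E < length (v @ u)"
  shows "P (v @ u) = P v * P u + ext (\<lambda>t. P (v @ t)) (rho u) + lin (lam v u)"
proof -
  obtain l where l: "length (v @ u) = Suc l" using assms(4) by (cases "length (v @ u)") auto
  have tk: "take (length (v @ u) - (D+1)) (v @ u) = v" "drop (length (v @ u) - (D+1)) (v @ u) = u"
    using assms(3) by auto
  have "P (v @ u) = Pf l v * Pf l u + ext (\<lambda>t. Pf l (v @ t)) (rho u) + lin (lam v u)"
    unfolding P_def l using assms(4) l tk by (simp add: Let_def)
  also have "\<dots> = P v * P u + ext (\<lambda>t. P (v @ t)) (rho u) + lin (lam v u)"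
  proof -
    have lv: "length v \<ge> 1" using assms(1) by (cases v) (auto simp: WX_def)
    have "Pf l v = P v" by (rule Pf_stable) (use assms l lv in auto)
    moreover have "Pf l u = P u" by (rule Pf_stable) (use assms l lv in auto)
    moreover have "ext (\<lambda>t. Pf l (v @ t)) (rho u) = ext (\<lambda>t. P (v @ t)) (rho u)"
    proof (rule ext_cong)
      fix t assume "t \<in> ks (rho u)"
      then have "t \<in> WX X" "length t \<le> D" using rho_keys[OF assms(2)] by auto
      then show "Pf l (v @ t) = P (v @ t)"
        by (intro Pf_stable) (use assms l WX_append in auto)
    qed
    ultimately show ?thesis by simp
  qed
  finally show ?thesis .
qed

lemma rr_RE: "w \<in> WX X \<Longrightarrow> length w \<le> E \<Longrightarrow> rr w \<in> RE"
  unfolding RE_def using rr_R[of w] rho_deg[of w]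
  by (auto simp: rr_def kp_wd E_def intro!: kp_diff elim: degle_mono)

lemma P_FY_phi: "w \<in> WX X \<Longrightarrow> FY (P w) \<and> phi (P w) = rr w"
proof (induction "length w" arbitrary: w rule: less_induct)
  case less
  show ?case
  proof (cases "length w \<le> E")
    case True
    then show ?thesis using LL_FY[OF lin(1)[OF rr_RE[OF less.prems True]]] lin(2)[OF rr_RE[OF less.prems True]]
      by (simp add: P_short)
  next
    case False
    define v where "v = take (length w - (D+1)) w"
    define u where "u = drop (length w - (D+1)) w"
    have E: "E < length w" using False by simp
    note sf = split_facts[OF less.prems(1) E, folded v_def u_def]
    have eq: "P w = P v * P u + ext (\<lambda>t. P (v @ t)) (rho u) + lin (lam v u)"
      using P_split[of v u] sf E by simp
    have lamRE: "lam v u \<in> RE" using lam_RE sf by blast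
    have "FY (P w)" unfolding eq
    proof (intro kp_add FA_mult kp_ext)
      show "FY (P v)" "FY (P u)" using less.hyps sf by auto
      show "FY (lin (lam v u))" using lin(1)[OF lamRE] by (rule LL_FY)
      fix t assume "t \<in> ks (rho u)"
      then show "FY (P (v @ t))" using less.hyps sf by auto
    qed
    moreover have "phi (P w) = rr w"
    proof -
      have "phi (P w) = rr v * rr u + ext (\<lambda>t. rr (v @ t)) (rho u) + lam v u"
        unfolding eq phi_add phi_mult phi_ext lin(2)[OF lamRE] using less.hyps sf
        by (auto intro!: ext_cong)
      also have "\<dots> = rr w" using sf by (simp add: lam_def)
      finally show ?thesis .
    qed
    ultimately show ?thesis by simp
  qed
qed

lemma P_FY: "w \<in> WX X \<Longrightarrow> FY (P w)" using P_FY_phi by blast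
lemma phi_P: "w \<in> WX X \<Longrightarrow> phi (P w) = rr w" using P_FY_phi by blast

definition "d0 = Max (insert 1 ((\<lambda>b. Max (insert 0 (length ` ks (P b)))) ` {b. b \<in> WX X \<and> length b \<le> 2*E}))"

lemma d0_ge1: "1 \<le> d0"
  unfolding d0_def by (rule Max_ge) (auto intro: finite_WX_le[OF finX])

lemma P_deg: assumes "b \<in> WX X" "length b \<le> 2*E" shows "degle (P b) d0"
  unfolding kp_def
proof
  fix m assume "m \<in> ks (P b)"
  then have "length m \<le> Max (insert 0 (length ` ks (P b)))" by (intro Max_ge) auto
  also have "\<dots> \<le> d0" unfolding d0_def using assms
    by (intro Max_ge) (auto intro: finite_WX_le[OF finX])
  finally show "length m \<le> d0" .
qed

definition "hiP s = ext (\<lambda>b. if E < length b then P b else 0) s"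
definition "hiR s = ext (\<lambda>b. if E < length b then rr b else 0) s"
definition "lo s = s - hiR s"
definition "nf s = hiP s + lin (lo s)"

lemma R_keys: "s \<in> R \<Longrightarrow> b \<in> ks s \<Longrightarrow> b \<in> WX X"
  using R_FA by (auto simp: kp_def)

lemma hiR_R: "s \<in> R \<Longrightarrow> hiR s \<in> R"
  unfolding hiR_def by (rule R_ext) (auto simp: R_0 rr_R R_keys)

lemma lo_RE: assumes "s \<in> R" shows "lo s \<in> RE"
proof -
  have "lo s \<in> R" unfolding lo_def using assms hiR_R by (intro R_diff)
  moreover have "degle (lo s) E"
    unfolding kp_def
  proof (rule ccontr)
    assume "\<not> (\<forall>m\<in>ks (lo s). length m \<le> E)"
    then obtain w where w: "w \<in> ks (lo s)" "E < length w" by auto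
    have z: "b \<in> ks s \<Longrightarrow> lk (if E < length b then rr b else 0) w = (if b = w then 1 else 0)" for b
    proof -
      assume b: "b \<in> ks s"
      have "lk (rho b) w = 0"
      proof -
        have "w \<notin> ks (rho b)" using rho_deg[OF R_keys[OF assms b]] w(2) unfolding kp_def E_def by force
        then show ?thesis by (simp add: in_keys_iff)
      qed
      then show ?thesis using w(2) by (auto simp: rr_def lookup_minus lookup_wd)
    qed
    have "lk (hiR s) w = (\<Sum>b\<in>ks s. lk s b * (if b = w then 1 else 0))"
      unfolding hiR_def lookup_ext using z by (intro sum.cong) auto
    also have "\<dots> = lk s w"
      by (auto simp: if_distrib sum.delta in_keys_iff cong: if_cong)
    finally have "lk (lo s) w = 0" by (simp add: lo_def lookup_minus)
    then show False using w(1) by (simp add: in_keys_iff)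
  qed
  ultimately show ?thesis by (simp add: RE_def)
qed

lemma nf_FY: "s \<in> R \<Longrightarrow> FY (nf s)"
  unfolding nf_def hiP_def
  by (intro kp_add kp_ext LL_FY[OF lin(1)[OF lo_RE]]) (auto simp: P_FY R_keys)

lemma phi_hiP: "s \<in> R \<Longrightarrow> phi (hiP s) = hiR s"
  unfolding hiP_def hiR_def phi_ext by (rule ext_cong) (auto simp: phi_P phi_0 R_keys)

lemma phi_nf: "s \<in> R \<Longrightarrow> phi (nf s) = s"
  by (simp add: nf_def phi_add phi_hiP lin lo_RE) (simp add: lo_def)

lemma nf_deg: assumes "s \<in> R" "degle s (2*E)" shows "degle (nf s) d0"
  unfolding nf_def hiP_def
proof (intro kp_add kp_ext)
  show "degle (lin (lo s)) d0" using LL_deg[OF lin(1)[OF lo_RE[OF assms(1)]]] d0_ge1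
    by (rule degle_mono)
  fix b assume "b \<in> ks s"
  then show "degle (if E < length b then P b else 0) d0"
    using assms R_keys[OF assms(1)] P_deg[of b] by (auto simp: kp_def)
qed

end

context constr begin

definition "dd = d0 + 1"
definition "KD = {p. FY p \<and> degle p dd \<and> phi p = 0}"

lemma KD_submod: "submod KD"
  unfolding KD_def submod_def by (auto intro: kp_add kp_sm simp: phi_add phi_sm phi_0)

lemma KD_keys: "KD \<subseteq> {p. ks p \<subseteq> {m. set m \<subseteq> {..<n} \<and> length m \<le> dd}}"
  unfolding KD_def by (auto simp: kp_def WX_def)

definition "G0 = (SOME B. finite B \<and> B \<subseteq> KD \<and> KD = span B)"

lemma G0: "finite G0" "G0 \<subseteq> KD" "KD = span G0"
proof -
  have "\<exists>B. finite B \<and> B \<subseteq> KD \<and> KD = span B"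
    by (rule noeth_module[OF noeth finite_words KD_submod KD_keys]) simp
  then show "finite G0" "G0 \<subseteq> KD" "KD = span G0"
    unfolding G0_def by (metis (mono_tags, lifting) someI_ex)+
qed

lemma phi_LL: "l \<in> LL \<Longrightarrow> phi l \<in> RE"
proof -
  have "submod {l. phi l \<in> RE}" using RE_submod
    by (auto simp: submod_def phi_add phi_sm phi_0)
  then have "LL \<subseteq> {l. phi l \<in> RE}" unfolding LL_def
    by (rule span_subset) (auto simp: phi_wd gen_RE)
  then show "l \<in> LL \<Longrightarrow> phi l \<in> RE" by blast
qed

lemma RE_R: "h \<in> RE \<Longrightarrow> h \<in> R" by (simp add: RE_def)
lemma RE_deg: "h \<in> RE \<Longrightarrow> degle h E" by (simp add: RE_def)

lemma wd_LL: "i < n \<Longrightarrow> wd [i] \<in> LL"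
  unfolding LL_def by (rule span_base) auto

lemma dd_ge2: "2 \<le> dd" using d0_ge1 by (simp add: dd_def)

lemma rr_deg: "w \<in> WX X \<Longrightarrow> degle (rr w) (max (length w) D)"
  unfolding rr_def by (intro kp_diff) (auto simp: kp_wd elim: degle_mono[OF rho_deg])

end

locale constrJ = constr X R D rho
  for X :: "'a set" and R :: "('a,'k::comm_ring_1) pm set" and D rho +
  fixes J :: "(nat,'k) pm set"
  assumes J_sub: "submod J" and J_l: "\<And>a p. a \<in> J \<Longrightarrow> FY p \<Longrightarrow> p * a \<in> J"
    and J_r: "\<And>a p. a \<in> J \<Longrightarrow> FY p \<Longrightarrow> a * p \<in> J" and G0J: "G0 \<subseteq> J"
begin

definition cg where "cg a b \<longleftrightarrow> a - b \<in> J"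

lemma cg_refl: "cg a a" using J_sub by (simp add: cg_def submod_def)
lemma cg_sym: "cg a b \<Longrightarrow> cg b a"
proof -
  assume "cg a b"
  then have "sm (-1) (a - b) \<in> J" using J_sub by (simp add: cg_def submod_def)
  moreover have "sm (-1) (a - b) = b - a" by (simp add: sm_minus2)
  ultimately show ?thesis by (simp add: cg_def)
qed
lemma cg_trans: "cg a b \<Longrightarrow> cg b c \<Longrightarrow> cg a c"
proof -
  assume "cg a b" "cg b c"
  moreover have "\<forall>p\<in>J. \<forall>q\<in>J. p + q \<in> J" using J_sub by (simp add: submod_def)
  ultimately have "(a - b) + (b - c) \<in> J" unfolding cg_def by blast
  moreover have "(a - b) + (b - c) = a - c" by simp
  ultimately show ?thesis by (simp add: cg_def)
qed
lemma cg_add: "cg a b \<Longrightarrow> cg c d \<Longrightarrow> cg (a + c) (b + d)"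
proof -
  assume "cg a b" "cg c d"
  then have "(a - b) + (c - d) \<in> J" using J_sub by (simp add: cg_def submod_def)
  then show ?thesis by (simp add: cg_def algebra_simps)
qed
lemma cg_sm: "cg a b \<Longrightarrow> cg (sm c a) (sm c b)"
  using J_sub by (simp add: cg_def submod_def sm_diff[symmetric])
lemma cg_neg: "cg a b \<Longrightarrow> cg (- a) (- b)"
  using cg_sm[of a b "-1"] by (simp add: sm_minus2)
lemma cg_diff: "cg a b \<Longrightarrow> cg c d \<Longrightarrow> cg (a - c) (b - d)"
  using cg_add[OF _ cg_neg, of a b c d] by simp
lemma cg_mult_r: "cg a b \<Longrightarrow> FY p \<Longrightarrow> cg (a * p) (b * p)"
  using J_r by (simp add: cg_def left_diff_distrib[symmetric])
lemma cg_mult_l: "cg a b \<Longrightarrow> FY p \<Longrightarrow> cg (p * a) (p * b)"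
  using J_l by (simp add: cg_def right_diff_distrib[symmetric])
lemma cg_sum: "(\<And>i. i \<in> S \<Longrightarrow> cg (f i) (g i)) \<Longrightarrow> cg (sum f S) (sum g S)"
  by (induction S rule: infinite_finite_induct) (auto intro: cg_add cg_refl)
lemma cg_ext: "(\<And>b. b \<in> ks p \<Longrightarrow> cg (f b) (g b)) \<Longrightarrow> cg (ext f p) (ext g p)"
  unfolding ext_def by (rule cg_sum) (auto intro: cg_sm)

lemma BD: assumes "FY p" "FY q" "degle p dd" "degle q dd" "phi p = phi q" shows "cg p q"
proof -
  have "p - q \<in> KD" using assms by (auto simp: KD_def phi_diff intro: kp_diff)
  then have "p - q \<in> span G0" using G0 by simp
  also have "span G0 \<subseteq> J" using span_subset[OF J_sub G0J] .
  finally show ?thesis by (simp add: cg_def)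
qed

lemma BDnf: assumes "FY q" "degle q dd" "s \<in> R" "degle s (2*E)" "phi q = s" shows "cg q (nf s)"
  using assms nf_FY[OF assms(3)] nf_deg[OF assms(3,4)] phi_nf[OF assms(3)]
  by (intro BD) (auto simp: dd_def elim: degle_mono)

lemma BDlin: assumes "l \<in> LL" "phi l = 0" shows "cg l 0"
proof (rule BD)
  show "degle l dd" using LL_deg[OF assms(1)] by (rule degle_mono) (use dd_ge2 in simp)
qed (use assms LL_FY phi_0 in auto)

lemma nf_0: "cg (nf 0) 0"
proof -
  have lo0: "lo 0 = 0" by (simp add: lo_def hiR_def)
  have "nf 0 = lin 0" by (simp add: nf_def hiP_def lo0)
  then show ?thesis using lin[of 0] RE_submod BDlin by (auto simp: submod_def)
qed

lemma hiR_add: "hiR (s + t) = hiR s + hiR t" by (simp add: hiR_def ext_add)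
lemma hiR_sm: "hiR (sm c s) = sm c (hiR s)" by (simp add: hiR_def ext_sm)
lemma hiP_add: "hiP (s + t) = hiP s + hiP t" by (simp add: hiP_def ext_add)
lemma hiP_sm: "hiP (sm c s) = sm c (hiP s)" by (simp add: hiP_def ext_sm)

lemma nf_add: assumes "s \<in> R" "t \<in> R" shows "cg (nf (s + t)) (nf s + nf t)"
proof -
  have lo: "lo (s + t) = lo s + lo t" by (simp add: lo_def hiR_add)
  have RE: "lo s \<in> RE" "lo t \<in> RE" using lo_RE assms by auto
  then have RE3: "lo s + lo t \<in> RE" using RE_submod by (simp add: submod_def)
  note RE = RE RE3
  have "lin (lo s + lo t) - (lin (lo s) + lin (lo t)) \<in> LL"
    using RE lin LL_submod by (intro submod_diff) (auto simp: submod_def)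
  moreover have "phi (lin (lo s + lo t) - (lin (lo s) + lin (lo t))) = 0"
    using RE by (simp add: phi_diff phi_add lin)
  ultimately have "cg (lin (lo s + lo t) - (lin (lo s) + lin (lo t))) 0" by (rule BDlin)
  then show ?thesis by (simp add: cg_def nf_def hiP_add lo algebra_simps)
qed

lemma nf_sm: assumes "s \<in> R" shows "cg (nf (sm c s)) (sm c (nf s))"
proof -
  have lo: "lo (sm c s) = sm c (lo s)" by (simp add: lo_def hiR_sm sm_diff)
  have RE: "lo s \<in> RE" "sm c (lo s) \<in> RE" using lo_RE assms RE_submod by (auto simp: submod_def)
  have "lin (sm c (lo s)) - sm c (lin (lo s)) \<in> LL"
    using RE lin LL_submod by (intro submod_diff) (auto simp: submod_def)
  moreover have "phi (lin (sm c (lo s)) - sm c (lin (lo s))) = 0"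
    using RE by (simp add: phi_diff phi_sm lin)
  ultimately have "cg (lin (sm c (lo s)) - sm c (lin (lo s))) 0" by (rule BDlin)
  then show ?thesis by (simp add: cg_def nf_def hiP_sm lo sm_add algebra_simps)
qed

lemma nf_diff: assumes "s \<in> R" "t \<in> R" shows "cg (nf (s - t)) (nf s - nf t)"
proof -
  have m: "- t = sm (-1) t" by (simp add: sm_minus2)
  have "cg (nf (s + sm (-1) t)) (nf s + nf (sm (-1) t))" using assms R_sm by (intro nf_add) auto
  moreover have "cg (nf s + nf (sm (-1) t)) (nf s + sm (-1) (nf t))"
    using assms by (intro cg_add cg_refl nf_sm)
  ultimately show ?thesis using cg_trans by (simp add: sm_minus2 flip: diff_conv_add_uminus)
qed

lemma nf_sum: "(\<And>i. i \<in> S \<Longrightarrow> g i \<in> R) \<Longrightarrow> cg (nf (sum g S)) (\<Sum>i\<in>S. nf (g i))"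
proof (induction S rule: infinite_finite_induct)
  case (infinite S) then show ?case using nf_0 by simp
next
  case empty then show ?case using nf_0 by simp
next
  case (insert x F)
  then have "cg (nf (g x + sum g F)) (nf (g x) + nf (sum g F))"
    by (intro nf_add R_sum) auto
  moreover have "cg (nf (g x) + nf (sum g F)) (nf (g x) + (\<Sum>i\<in>F. nf (g i)))"
    using insert by (intro cg_add cg_refl) auto
  ultimately show ?case using insert cg_trans by simp
qed

lemma cg_nf_ext:
  assumes "\<And>b. b \<in> ks p \<Longrightarrow> cg (f b) (nf (g b)) \<and> g b \<in> R"
  shows "cg (ext f p) (nf (ext g p))"
proof -
  have "cg (ext f p) (\<Sum>b\<in>ks p. sm (lk p b) (nf (g b)))"
    unfolding ext_def using assms by (intro cg_sum cg_sm) auto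
  moreover have "cg (\<Sum>b\<in>ks p. sm (lk p b) (nf (g b))) (\<Sum>b\<in>ks p. nf (sm (lk p b) (g b)))"
    using assms by (intro cg_sum cg_sym[OF nf_sm]) auto
  moreover have "cg (\<Sum>b\<in>ks p. nf (sm (lk p b) (g b))) (nf (ext g p))"
    unfolding ext_def using assms by (intro cg_sym[OF nf_sum] R_sm) auto
  ultimately show ?thesis using cg_trans by blast
qed

end

context constrJ begin

lemma E_gt_D: "D < E" by (simp add: E_def)

lemma P_nf: assumes c: "c \<in> WX X" shows "cg (P c) (nf (rr c))"
proof (cases "length c \<le> E")
  case True
  show ?thesis
  proof (rule BDnf)
    show "FY (P c)" using P_FY[OF c] .
    show "degle (P c) dd" unfolding P_short[OF True]
      using LL_deg[OF lin(1)[OF rr_RE[OF c True]]] by (rule degle_mono) (use dd_ge2 in simp)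
    show "rr c \<in> R" using rr_R[OF c] .
    show "degle (rr c) (2*E)" using rr_deg[OF c] by (rule degle_mono) (use True in \<open>simp add: E_def\<close>)
    show "phi (P c) = rr c" using phi_P[OF c] .
  qed
next
  case False
  have z: "ext (\<lambda>b. if E < length b then f b else 0) (rho c) = 0" for f :: "'a list \<Rightarrow> ('z,'k) pm"
  proof -
    have "ext (\<lambda>b. if E < length b then f b else 0) (rho c) = ext (\<lambda>b. 0) (rho c)"
    proof (rule ext_cong)
      fix b assume "b \<in> ks (rho c)"
      then have "length b \<le> D" using rho_keys[OF c] by blast
      then show "(if E < length b then f b else 0) = 0" using E_gt_D by auto
    qed
    then show ?thesis by (simp add: ext_zero_fun)
  qed
  have hp: "hiP (rr c) = P c" using False z by (simp add: hiP_def rr_def ext_diff ext_wd_single)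
  have hr: "hiR (rr c) = rr c" using False z by (simp add: hiR_def rr_def ext_diff ext_wd_single)
  have nf: "nf (rr c) = P c + lin 0" by (simp add: nf_def hp lo_def hr)
  have "0 \<in> RE" using RE_submod by (simp add: submod_def)
  then have "cg (lin 0) 0" using lin by (intro BDlin) auto
  then have "cg (P c + lin 0) (P c + 0)" by (intro cg_add cg_refl)
  then have "cg (P c + lin 0) (P c)" by simp
  then show ?thesis unfolding nf by (rule cg_sym)
qed

lemma lemM_a: assumes b: "b \<in> WX X" "E < length b" and u: "u \<in> WX X" "length u = D + 1"
  shows "cg (P b * P u) (nf (rr b * rr u))"
proof -
  have bu: "b @ u \<in> WX X" using b u by (intro WX_append)
  have lamRE: "lam b u \<in> RE" using lam_RE b u by blast
  have eq: "P b * P u = P (b @ u) - ext (\<lambda>t. P (b @ t)) (rho u) - lin (lam b u)"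
    using P_split[of b u] b u by simp
  have bt: "t \<in> ks (rho u) \<Longrightarrow> b @ t \<in> WX X" for t using rho_keys[OF u(1)] b by (auto intro: WX_append)
  have c1: "cg (P (b @ u)) (nf (rr (b @ u)))" using P_nf[OF bu] .
  have c2: "cg (ext (\<lambda>t. P (b @ t)) (rho u)) (nf (ext (\<lambda>t. rr (b @ t)) (rho u)))"
    by (rule cg_nf_ext) (auto intro: P_nf rr_R bt)
  have c3: "cg (lin (lam b u)) (nf (lam b u))"
  proof (rule BDnf)
    show "FY (lin (lam b u))" by (rule LL_FY[OF lin(1)[OF lamRE]])
    show "degle (lin (lam b u)) dd" using LL_deg[OF lin(1)[OF lamRE]] by (rule degle_mono) (use dd_ge2 in simp)
    show "lam b u \<in> R" using lamRE by (rule RE_R)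
    show "degle (lam b u) (2*E)" using RE_deg[OF lamRE] by (rule degle_mono) simp
    show "phi (lin (lam b u)) = lam b u" using lin(2)[OF lamRE] .
  qed
  have Rs: "rr (b @ u) \<in> R" "ext (\<lambda>t. rr (b @ t)) (rho u) \<in> R" "lam b u \<in> R"
    using rr_R[OF bu] lamRE RE_R by (auto intro!: R_ext rr_R bt)
  have m1: "cg (P b * P u) (nf (rr (b @ u)) - nf (ext (\<lambda>t. rr (b @ t)) (rho u)) - nf (lam b u))"
    unfolding eq by (intro cg_diff c1 c2 c3)
  have m2: "cg (nf (rr (b @ u)) - nf (ext (\<lambda>t. rr (b @ t)) (rho u)) - nf (lam b u))
                    (nf (rr (b @ u) - ext (\<lambda>t. rr (b @ t)) (rho u)) - nf (lam b u))"
    by (intro cg_diff cg_refl cg_sym[OF nf_diff] Rs)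
  have m3: "cg (nf (rr (b @ u) - ext (\<lambda>t. rr (b @ t)) (rho u)) - nf (lam b u))
                    (nf (rr (b @ u) - ext (\<lambda>t. rr (b @ t)) (rho u) - lam b u))"
    by (intro cg_sym[OF nf_diff] R_diff Rs)
  have e: "rr (b @ u) - ext (\<lambda>t. rr (b @ t)) (rho u) - lam b u = rr b * rr u"
    by (simp add: lam_def)
  show ?thesis using cg_trans[OF cg_trans[OF m1 m2] m3] unfolding e .
qed

lemma lemM: assumes u: "u \<in> WX X" "length u = D + 1" and s: "s \<in> R"
  shows "cg (nf s * P u) (nf (s * rr u))"
proof -
  have uE: "length u \<le> E" using u by (simp add: E_def)
  have a: "cg (hiP s * P u) (nf (hiR s * rr u))"
  proof -
    have "hiP s * P u = ext (\<lambda>b. (if E < length b then P b else 0) * P u) s"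
      by (simp add: hiP_def ext_mult_right)
    moreover have "hiR s * rr u = ext (\<lambda>b. (if E < length b then rr b else 0) * rr u) s"
      by (simp add: hiR_def ext_mult_right)
    moreover have "cg (ext (\<lambda>b. (if E < length b then P b else 0) * P u) s)
                      (nf (ext (\<lambda>b. (if E < length b then rr b else 0) * rr u) s))"
    proof (rule cg_nf_ext)
      fix b assume b: "b \<in> ks s"
      then have bW: "b \<in> WX X" using R_keys[OF s] by blast
      show "cg ((if E < length b then P b else 0) * P u) (nf ((if E < length b then rr b else 0) * rr u)) \<and>
            (if E < length b then rr b else 0) * rr u \<in> R"
        using lemM_a[OF bW _ u] cg_sym[OF nf_0] R_0 R_mult2[OF rr_R[OF bW] rr_R[OF u(1)]] by auto
    qed
    ultimately show ?thesis by simp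
  qed
  have loRE: "lo s \<in> RE" using lo_RE[OF s] .
  have b: "cg (lin (lo s) * P u) (nf (lo s * rr u))"
  proof (rule BDnf)
    show "FY (lin (lo s) * P u)" using LL_FY[OF lin(1)[OF loRE]] P_FY[OF u(1)] by (rule FA_mult)
    have "degle (lin (lo s) * P u) (1 + 1)"
      using LL_deg[OF lin(1)[OF loRE]] LL_deg[OF lin(1)[OF rr_RE[OF u(1) uE]]]
      by (intro degle_mult) (simp_all add: P_short[OF uE])
    then show "degle (lin (lo s) * P u) dd" by (rule degle_mono) (use dd_ge2 in simp)
    show "lo s * rr u \<in> R" using RE_R[OF loRE] rr_R[OF u(1)] by (rule R_mult2)
    have "degle (lo s * rr u) (E + max (length u) D)"
      using RE_deg[OF loRE] rr_deg[OF u(1)] by (rule degle_mult)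
    then show "degle (lo s * rr u) (2*E)" by (rule degle_mono) (use u in \<open>simp add: E_def\<close>)
    show "phi (lin (lo s) * P u) = lo s * rr u" by (simp add: phi_mult lin(2)[OF loRE] phi_P[OF u(1)])
  qed
  have e1: "nf s * P u = hiP s * P u + lin (lo s) * P u" by (simp add: nf_def distrib_right)
  have m1: "cg (hiP s * P u + lin (lo s) * P u) (nf (hiR s * rr u) + nf (lo s * rr u))"
    using a b by (rule cg_add)
  have m2: "cg (nf (hiR s * rr u) + nf (lo s * rr u)) (nf (hiR s * rr u + lo s * rr u))"
    by (intro cg_sym[OF nf_add] R_mult2 hiR_R s rr_R u RE_R loRE)
  have e2: "hiR s * rr u + lo s * rr u = s * rr u" by (simp add: lo_def distrib_right[symmetric])
  show ?thesis using cg_trans[OF m1 m2] unfolding e1 e2 .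
qed

end

context constrJ begin

lemma claimC: "w \<in> WX X \<Longrightarrow> l \<in> LL \<Longrightarrow> cg (l * P w) (nf (phi l * rr w))"
proof (induction "length w" arbitrary: w rule: less_induct)
  case less
  note w = less.prems(1) and l = less.prems(2)
  define g where "g = phi l"
  have gRE: "g \<in> RE" using phi_LL[OF l] by (simp add: g_def)
  have gR: "g \<in> R" using RE_R[OF gRE] .
  show ?case
  proof (cases "length w \<le> E")
    case True
    show ?thesis unfolding g_def[symmetric]
    proof (rule BDnf)
      show "FY (l * P w)" using LL_FY[OF l] P_FY[OF w] by (rule FA_mult)
      have "degle (l * P w) (1 + 1)"
        using LL_deg[OF l] LL_deg[OF lin(1)[OF rr_RE[OF w True]]]
        by (intro degle_mult) (simp_all add: P_short[OF True])
      then show "degle (l * P w) dd" by (rule degle_mono) (use dd_ge2 in simp)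
      show "g * rr w \<in> R" using gR rr_R[OF w] by (rule R_mult2)
      have "degle (g * rr w) (E + max (length w) D)" using RE_deg[OF gRE] rr_deg[OF w] by (rule degle_mult)
      then show "degle (g * rr w) (2*E)" by (rule degle_mono) (use True in \<open>simp add: E_def\<close>)
      show "phi (l * P w) = g * rr w" by (simp add: phi_mult g_def phi_P[OF w])
    qed
  next
    case False
    define v where "v = take (length w - (D+1)) w"
    define u where "u = drop (length w - (D+1)) w"
    have E: "E < length w" using False by simp
    note sf = split_facts[OF w E, folded v_def u_def]
    have lamRE: "lam v u \<in> RE" using lam_RE sf by blast
    have vt: "t \<in> ks (rho u) \<Longrightarrow> v @ t \<in> WX X" for t using sf by blast
    have Pw: "P w = P v * P u + ext (\<lambda>t. P (v @ t)) (rho u) + lin (lam v u)"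
      using P_split[of v u] sf E by simp
    have e1: "l * P w = (l * P v) * P u + ext (\<lambda>t. l * P (v @ t)) (rho u) + l * lin (lam v u)"
      unfolding Pw by (simp add: distrib_left ext_mult_left mult.assoc)
    have t1: "cg ((l * P v) * P u) (nf (g * rr v) * P u)"
      using less.hyps[OF sf(5) sf(2) l] P_FY[OF sf(3)] unfolding g_def by (rule cg_mult_r)
    have t1': "cg (nf (g * rr v) * P u) (nf (g * rr v * rr u))"
      using lemM[OF sf(3) sf(4) R_mult2[OF gR rr_R[OF sf(2)]]] .
    have t2: "cg (ext (\<lambda>t. l * P (v @ t)) (rho u)) (nf (ext (\<lambda>t. g * rr (v @ t)) (rho u)))"
    proof (rule cg_nf_ext)
      fix t assume t: "t \<in> ks (rho u)"
      show "cg (l * P (v @ t)) (nf (g * rr (v @ t))) \<and> g * rr (v @ t) \<in> R"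
        using less.hyps[of "v @ t", OF _ vt[OF t] l] sf(7)[OF t] R_mult2[OF gR rr_R[OF vt[OF t]]]
        unfolding g_def by simp
    qed
    have t3: "cg (l * lin (lam v u)) (nf (g * lam v u))"
    proof (rule BDnf)
      show "FY (l * lin (lam v u))" using LL_FY[OF l] LL_FY[OF lin(1)[OF lamRE]] by (rule FA_mult)
      have "degle (l * lin (lam v u)) (1 + 1)"
        using LL_deg[OF l] LL_deg[OF lin(1)[OF lamRE]] by (rule degle_mult)
      then show "degle (l * lin (lam v u)) dd" by (rule degle_mono) (use dd_ge2 in simp)
      show "g * lam v u \<in> R" using gR RE_R[OF lamRE] by (rule R_mult2)
      have "degle (g * lam v u) (E + E)" using RE_deg[OF gRE] RE_deg[OF lamRE] by (rule degle_mult)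
      then show "degle (g * lam v u) (2*E)" by (simp add: mult_2)
      show "phi (l * lin (lam v u)) = g * lam v u" by (simp add: phi_mult g_def lin(2)[OF lamRE])
    qed
    have Rs: "g * rr v * rr u \<in> R" "ext (\<lambda>t. g * rr (v @ t)) (rho u) \<in> R" "g * lam v u \<in> R"
      using gR rr_R sf RE_R[OF lamRE] vt by (auto intro!: R_mult2 R_ext)
    have m1: "cg (l * P w) (nf (g * rr v * rr u) + nf (ext (\<lambda>t. g * rr (v @ t)) (rho u)) + nf (g * lam v u))"
      unfolding e1 by (intro cg_add t2 t3 cg_trans[OF t1 t1'])
    have m2: "cg (nf (g * rr v * rr u) + nf (ext (\<lambda>t. g * rr (v @ t)) (rho u)) + nf (g * lam v u))
                 (nf (g * rr v * rr u + ext (\<lambda>t. g * rr (v @ t)) (rho u)) + nf (g * lam v u))"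
      by (intro cg_add cg_refl cg_sym[OF nf_add] Rs)
    have m3: "cg (nf (g * rr v * rr u + ext (\<lambda>t. g * rr (v @ t)) (rho u)) + nf (g * lam v u))
                 (nf (g * rr v * rr u + ext (\<lambda>t. g * rr (v @ t)) (rho u) + g * lam v u))"
      by (intro cg_sym[OF nf_add] R_add Rs)
    have e2: "g * rr v * rr u + ext (\<lambda>t. g * rr (v @ t)) (rho u) + g * lam v u = phi l * rr w"
    proof -
      have "rr w = rr v * rr u + ext (\<lambda>t. rr (v @ t)) (rho u) + lam v u"
        using sf(1) by (simp add: lam_def)
      then show ?thesis by (simp add: g_def distrib_left ext_mult_left mult.assoc)
    qed
    show ?thesis using cg_trans[OF cg_trans[OF m1 m2] m3] unfolding e2 .
  qed
qed

lemma LL_nf: assumes l: "l \<in> LL" and s: "s \<in> R" shows "cg (l * nf s) (nf (phi l * s))"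
proof -
  define g where "g = phi l"
  have gRE: "g \<in> RE" using phi_LL[OF l] by (simp add: g_def)
  have gR: "g \<in> R" using RE_R[OF gRE] .
  have loRE: "lo s \<in> RE" using lo_RE[OF s] .
  have a: "cg (l * hiP s) (nf (g * hiR s))"
  proof -
    have "l * hiP s = ext (\<lambda>b. l * (if E < length b then P b else 0)) s"
      by (simp add: hiP_def ext_mult_left)
    moreover have "g * hiR s = ext (\<lambda>b. g * (if E < length b then rr b else 0)) s"
      by (simp add: hiR_def ext_mult_left)
    moreover have "cg (ext (\<lambda>b. l * (if E < length b then P b else 0)) s)
                      (nf (ext (\<lambda>b. g * (if E < length b then rr b else 0)) s))"
    proof (rule cg_nf_ext)
      fix b assume b: "b \<in> ks s"
      then have bW: "b \<in> WX X" using R_keys[OF s] by blast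
      show "cg (l * (if E < length b then P b else 0)) (nf (g * (if E < length b then rr b else 0))) \<and>
            g * (if E < length b then rr b else 0) \<in> R"
        using claimC[OF bW l] cg_sym[OF nf_0] R_0 R_mult2[OF gR rr_R[OF bW]] unfolding g_def by auto
    qed
    ultimately show ?thesis by simp
  qed
  have b: "cg (l * lin (lo s)) (nf (g * lo s))"
  proof (rule BDnf)
    show "FY (l * lin (lo s))" using LL_FY[OF l] LL_FY[OF lin(1)[OF loRE]] by (rule FA_mult)
    have "degle (l * lin (lo s)) (1 + 1)"
      using LL_deg[OF l] LL_deg[OF lin(1)[OF loRE]] by (rule degle_mult)
    then show "degle (l * lin (lo s)) dd" by (rule degle_mono) (use dd_ge2 in simp)
    show "g * lo s \<in> R" using gR RE_R[OF loRE] by (rule R_mult2)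
    have "degle (g * lo s) (E + E)" using RE_deg[OF gRE] RE_deg[OF loRE] by (rule degle_mult)
    then show "degle (g * lo s) (2*E)" by (simp add: mult_2)
    show "phi (l * lin (lo s)) = g * lo s" by (simp add: phi_mult g_def lin(2)[OF loRE])
  qed
  have e1: "l * nf s = l * hiP s + l * lin (lo s)" by (simp add: nf_def distrib_left)
  have m1: "cg (l * nf s) (nf (g * hiR s) + nf (g * lo s))" unfolding e1 using a b by (rule cg_add)
  have m2: "cg (nf (g * hiR s) + nf (g * lo s)) (nf (g * hiR s + g * lo s))"
    by (intro cg_sym[OF nf_add] R_mult2 gR hiR_R s RE_R loRE)
  have e2: "g * hiR s + g * lo s = phi l * s" by (simp add: g_def lo_def distrib_left[symmetric])
  show ?thesis using cg_trans[OF m1 m2] unfolding e2 .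
qed

lemma mono_nf: "m \<in> WX {..<n} \<Longrightarrow> phi (wd m) \<in> R \<and> cg (wd m) (nf (phi (wd m)))"
proof (induction m)
  case Nil then show ?case by (simp add: WX_def)
next
  case (Cons i m')
  have i: "i < n" using Cons.prems by (auto simp: WX_def)
  have wi: "wd [i] \<in> LL" using wd_LL[OF i] .
  have pi: "phi (wd [i]) = gen i" by (simp add: phi_wd)
  show ?case
  proof (cases "m' = []")
    case True
    have "cg (wd [i]) (nf (gen i))"
    proof (rule BDnf)
      show "FY (wd [i])" using LL_FY[OF wi] .
      show "degle (wd [i]) dd" using LL_deg[OF wi] by (rule degle_mono) (use dd_ge2 in simp)
      show "gen i \<in> R" using gen_R[OF i] .
      show "degle (gen i) (2*E)" using RE_deg[OF gen_RE[OF i]] by (rule degle_mono) simp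
      show "phi (wd [i]) = gen i" by (rule pi)
    qed
    then show ?thesis using True gen_R[OF i] by (simp add: pi)
  next
    case False
    have m': "m' \<in> WX {..<n}" using Cons.prems False by (auto simp: WX_def)
    note IH = Cons.IH[OF m']
    have e: "wd (i # m') = wd [i] * wd m'" using wd_append[of "[i]" m'] by simp
    have ph: "phi (wd (i # m')) = gen i * phi (wd m')" by (simp add: e phi_mult pi)
    have "cg (wd [i] * wd m') (wd [i] * nf (phi (wd m')))"
      using IH LL_FY[OF wi] by (intro cg_mult_l) auto
    moreover have "cg (wd [i] * nf (phi (wd m'))) (nf (gen i * phi (wd m')))"
      using LL_nf[OF wi, of "phi (wd m')"] IH by (simp add: pi)
    ultimately have "cg (wd (i # m')) (nf (phi (wd (i # m'))))"
      unfolding ph unfolding e by (rule cg_trans)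
    moreover have "phi (wd (i # m')) \<in> R" unfolding ph using gen_R[OF i] IH by (intro R_mult2) auto
    ultimately show ?thesis by simp
  qed
qed

lemma all_nf: assumes "FY p" shows "cg p (nf (phi p))"
proof -
  have "cg (ext wd p) (nf (ext (\<lambda>m. phi (wd m)) p))"
  proof (rule cg_nf_ext)
    fix m assume "m \<in> ks p"
    then have "m \<in> WX {..<n}" using assms by (auto simp: kp_def)
    then show "cg (wd m) (nf (phi (wd m))) \<and> phi (wd m) \<in> R" using mono_nf by blast
  qed
  moreover have "ext (\<lambda>m. phi (wd m)) p = phi p"
    using phi_ext[of wd p] by (simp add: ext_wd)
  ultimately show ?thesis by (simp add: ext_wd)
qed

lemma kernel_J: assumes "FY p" "phi p = 0" shows "p \<in> J"
proof -
  have "cg p (nf 0)" using all_nf[OF assms(1)] assms(2) by simp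
  then have "cg p 0" using nf_0 by (rule cg_trans)
  then show ?thesis by (simp add: cg_def)
qed

end

lemma append_eq_split: "(a @ b = w) \<longleftrightarrow> (\<exists>i\<in>{0..length w}. a = take i w \<and> b = drop i w)"
  by (auto intro!: bexI[of _ "length a"])

lemma fa_mult_lk: "fa_mult (lk p) (lk q) = lk (p * (q :: ('a,'k::comm_ring_1) pm))"
proof (rule ext)
  fix w :: "'a list"
  define h where "h = (\<lambda>x::'a list \<times> 'a list. lk p (fst x) * lk q (snd x))"
  define S where "S = (\<lambda>i. (take i w, drop i w)) ` {0..length w}"
  define K where "K = ks p \<times> ks q"
  have finK: "finite K" "finite S" by (simp_all add: K_def S_def)
  have injS: "inj_on (\<lambda>i. (take i w, drop i w)) {0..length w}"
    by (rule inj_onI) (metis append_take_drop_id length_take min.absorb2 atLeastAtMost_iff prod.inject)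
  have "fa_mult (lk p) (lk q) w = (\<Sum>x\<in>S. h x)"
    unfolding fa_mult_def S_def h_def by (subst sum.reindex[OF injS]) simp
  also have "\<dots> = (\<Sum>x\<in>S \<inter> K. h x)"
    by (rule sum.mono_neutral_right) (auto simp: finK h_def K_def in_keys_iff)
  also have "\<dots> = (\<Sum>x\<in>{x\<in>K. x \<in> S}. h x)"
    by (rule sum.cong) auto
  also have "\<dots> = (\<Sum>x\<in>K. if x \<in> S then h x else 0)"
    by (rule sum.inter_filter[OF finK(1)])
  also have "\<dots> = (\<Sum>x\<in>K. if fst x @ snd x = w then h x else 0)"
    by (rule sum.cong) (auto simp: S_def append_eq_split image_iff)
  also have "\<dots> = (\<Sum>a\<in>ks p. \<Sum>b\<in>ks q. if a + b = w then lk p a * lk q b else 0)"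
    unfolding K_def h_def by (simp add: sum.cartesian_product plus_list_def split_def)
  also have "\<dots> = lk (p * q) w" by (simp add: lookup_mult_fin)
  finally show "fa_mult (lk p) (lk q) w = lk (p * q) w" .
qed

lemma fa_smult_lk: "fa_smult c (lk p) = lk (sm c p)"
  by (simp add: fa_smult_def fun_eq_iff)

lemma fa_add_lk: "(\<lambda>w. lk p w + lk q w) = lk (p + q)"
  by (simp add: fun_eq_iff lookup_add)

lemma fa_zero_lk: "(\<lambda>_. 0) = lk 0"
  by (simp add: fun_eq_iff)

lemma free_alg_lk: "lk q \<in> free_alg X \<longleftrightarrow> FA X (q :: ('a,'k::comm_ring_1) pm)"
  by (auto simp: free_alg_def kp_def WX_def in_keys_iff)

lemma free_alg_Abs: "p \<in> free_alg X \<Longrightarrow> lk (Abs_poly_mapping p) = p"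
  by (simp add: free_alg_def)

lemma free_alg_ex: "p \<in> free_alg X \<Longrightarrow> \<exists>q. p = lk q \<and> FA X q"
  using free_alg_Abs free_alg_lk by metis

context constr begin

lemma gen_prod_R: "m \<in> WX {..<n} \<Longrightarrow> prod_list (map gen m) \<in> R"
proof (induction m)
  case Nil then show ?case by (simp add: WX_def)
next
  case (Cons i m')
  have i: "i < n" using Cons.prems by (auto simp: WX_def)
  show ?case
  proof (cases "m' = []")
    case True then show ?thesis using gen_R[OF i] by simp
  next
    case False
    then have "m' \<in> WX {..<n}" using Cons.prems by (auto simp: WX_def)
    then show ?thesis using Cons.IH gen_R[OF i] by (simp add: R_mult2)
  qed
qed

lemma phi_image: "phi ` {p. FY p} = R"
proof
  show "phi ` {p. FY p} \<subseteq> R"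
  proof
    fix s assume "s \<in> phi ` {p. FY p}"
    then obtain p where p: "FY p" "s = phi p" by blast
    have "phi p = ext (\<lambda>m. phi (wd m)) p" using phi_ext[of wd p] by (simp add: ext_wd)
    also have "\<dots> \<in> R"
    proof (rule R_ext)
      fix m assume "m \<in> ks p"
      then have "m \<in> WX {..<n}" using p(1) by (auto simp: kp_def)
      then show "phi (wd m) \<in> R" by (simp add: phi_wd gen_prod_R)
    qed
    finally show "s \<in> R" using p by simp
  qed
  show "R \<subseteq> phi ` {p. FY p}"
  proof
    fix s assume "s \<in> R"
    then have "nf s \<in> {p. FY p}" "s = phi (nf s)" using nf_FY phi_nf by auto
    then show "s \<in> phi ` {p. FY p}" by (rule rev_image_eqI) 
  qed
qed

lemma G0_FY: "g \<in> G0 \<Longrightarrow> FY g \<and> phi g = 0"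
  using G0(2) by (auto simp: KD_def)

lemma kernel_sub:
  assumes "submod J" "\<And>a p. a \<in> J \<Longrightarrow> FY p \<Longrightarrow> p * a \<in> J" "\<And>a p. a \<in> J \<Longrightarrow> FY p \<Longrightarrow> a * p \<in> J"
    "G0 \<subseteq> J" "FY p" "phi p = 0"
  shows "p \<in> J"
proof -
  interpret cj: constrJ X R D rho J
    using constr_axioms assms(1-4) by (simp add: constrJ_def constrJ_axioms_def)
  show ?thesis using assms(5,6) by (rule cj.kernel_J)
qed

end

theorem lemma2p3:
  fixes X :: "'x set" and R :: "('x list \<Rightarrow> 'k::comm_ring_1) set"
  assumes "noetherian_ring TYPE('k)"
    and "finite X"
    and "right_ideal X R"
    and "quotient_fg_module X R"
  shows "finitely_presented_sub X R"
proof -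
  define Rp where "Rp = {q :: ('x,'k) pm. lk q \<in> R}"
  have Rfa: "R \<subseteq> free_alg X" and R0: "(\<lambda>_. 0) \<in> R"
    and Radd: "\<And>a b. a \<in> R \<Longrightarrow> b \<in> R \<Longrightarrow> (\<lambda>w. a w + b w) \<in> R"
    and Rsm: "\<And>c a. a \<in> R \<Longrightarrow> fa_smult c a \<in> R"
    and Rmul: "\<And>a p. a \<in> R \<Longrightarrow> p \<in> free_alg X \<Longrightarrow> fa_mult a p \<in> R"
    using assms(3) unfolding right_ideal_def by blast+
  obtain F where F: "finite F" "F \<subseteq> free_alg X"
    "\<And>p. p \<in> free_alg X \<Longrightarrow> \<exists>c. (\<lambda>w. p w - (\<Sum>f\<in>F. c f * f w)) \<in> R"
    using assms(4) unfolding quotient_fg_module_def by blast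
  define D where "D = Max (insert 0 (\<Union>f\<in>F. length ` ks (Abs_poly_mapping f :: ('x,'k) pm)))"
  have Fdeg: "degle (Abs_poly_mapping f :: ('x,'k) pm) D" if "f \<in> F" for f
    unfolding kp_def
  proof
    fix m assume "m \<in> ks (Abs_poly_mapping f :: ('x,'k) pm)"
    then show "length m \<le> D" unfolding D_def using F(1) that by (intro Max_ge) auto
  qed
  have FFA: "FA X (Abs_poly_mapping f :: ('x,'k) pm)" if "f \<in> F" for f
    using free_alg_lk[of "Abs_poly_mapping f" X] free_alg_Abs[of f X] F(2) that by auto
  have FAbs: "f \<in> F \<Longrightarrow> lk (Abs_poly_mapping f :: ('x,'k) pm) = f" for f
    using free_alg_Abs F(2) by blast
  have rex: "\<exists>r. FA X r \<and> degle r D \<and> wd w - r \<in> Rp" if w: "w \<in> WX X" for w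
  proof -
    have "lk (wd w :: ('x,'k) pm) \<in> free_alg X" using w by (simp add: free_alg_lk kp_wd)
    then obtain c where c: "(\<lambda>v. lk (wd w :: ('x,'k) pm) v - (\<Sum>f\<in>F. c f * f v)) \<in> R" using F(3) by blast
    define r where "r = (\<Sum>f\<in>F. sm (c f) (Abs_poly_mapping f :: ('x,'k) pm))"
    have "FA X r" unfolding r_def by (intro kp_sum kp_sm FFA)
    moreover have "degle r D" unfolding r_def by (intro kp_sum kp_sm Fdeg)
    moreover have "lk (wd w - r) = (\<lambda>v. lk (wd w :: ('x,'k) pm) v - (\<Sum>f\<in>F. c f * f v))"
      by (simp add: r_def lookup_minus lookup_sum FAbs fun_eq_iff)
    then have "wd w - r \<in> Rp" using c by (simp add: Rp_def)
    ultimately show ?thesis by blast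
  qed
  have "\<forall>w. \<exists>r. w \<in> WX X \<longrightarrow> FA X r \<and> degle r D \<and> wd w - r \<in> Rp" using rex by blast
  then obtain rho where rho0: "\<forall>w. w \<in> WX X \<longrightarrow> FA X (rho w) \<and> degle (rho w) D \<and> wd w - rho w \<in> Rp"
    using choice[of "\<lambda>w r. w \<in> WX X \<longrightarrow> FA X r \<and> degle r D \<and> wd w - r \<in> Rp"] by blast
  then have rho: "\<And>w. w \<in> WX X \<Longrightarrow> FA X (rho w) \<and> degle (rho w) D \<and> wd w - rho w \<in> Rp" by blast
  have Rp_FA: "\<And>p. p \<in> Rp \<Longrightarrow> FA X p" using Rfa by (auto simp: Rp_def free_alg_lk[symmetric])
  have Rp_sub: "submod Rp"
  proof -
    have "lk 0 \<in> R" using R0 by (simp add: fa_zero_lk)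
    moreover have "lk (p + q) \<in> R" if "lk p \<in> R" "lk q \<in> R" for p q :: "('x,'k) pm"
      using Radd[OF that] by (simp add: fa_add_lk)
    moreover have "lk (sm cc p) \<in> R" if "lk p \<in> R" for cc and p :: "('x,'k) pm"
      using Rsm[OF that, of cc] by (simp add: fa_smult_lk)
    ultimately show ?thesis unfolding submod_def Rp_def by blast
  qed
  have Rp_mult: "\<And>p q. p \<in> Rp \<Longrightarrow> FA X q \<Longrightarrow> p * q \<in> Rp"
    using Rmul by (auto simp: Rp_def free_alg_lk[symmetric] fa_mult_lk[symmetric])
  interpret c: constr X Rp D rho
  proof (unfold_locales)
    show "noetherian_ring TYPE('k)" by (rule assms(1))
    show "finite X" by (rule assms(2))
  qed (use Rp_FA Rp_sub Rp_mult rho in blast)+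
  define phf where "phf = (\<lambda>p :: nat list \<Rightarrow> 'k. lk (c.phi (Abs_poly_mapping p)))"
  have phf_lk: "phf (lk q) = lk (c.phi q)" for q by (simp add: phf_def)
  define Y where "Y = {..<c.n}"
  have fY: "p \<in> free_alg Y \<Longrightarrow> \<exists>q. p = lk q \<and> c.FY q" for p unfolding Y_def by (rule free_alg_ex)
  have hom: "alg_hom_onto Y X R phf"
    unfolding alg_hom_onto_def
  proof (intro conjI ballI allI)
    show "phf ` free_alg Y = R"
    proof
      show "phf ` free_alg Y \<subseteq> R"
      proof
        fix s assume "s \<in> phf ` free_alg Y"
        then obtain q where q: "c.FY q" "s = lk (c.phi q)" using fY phf_lk by blast
        then have "c.phi q \<in> Rp" using c.phi_image by blast
        then show "s \<in> R" using q by (simp add: Rp_def)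
      qed
      show "R \<subseteq> phf ` free_alg Y"
      proof
        fix r assume r: "r \<in> R"
        then obtain s where s: "r = lk s" "FA X s" using Rfa free_alg_ex by blast
        then have "s \<in> Rp" using r by (simp add: Rp_def)
        then obtain q where q: "c.FY q" "s = c.phi q" using c.phi_image by blast
        then have "r = phf (lk q)" using s by (simp add: phf_lk)
        moreover have "lk q \<in> free_alg Y" using q by (simp add: free_alg_lk Y_def)
        ultimately show "r \<in> phf ` free_alg Y" by blast
      qed
    qed
  next
    fix p q :: "nat list \<Rightarrow> 'k" assume "p \<in> free_alg Y" "q \<in> free_alg Y"
    then obtain p' q' where pq: "p = lk p'" "q = lk q'" using fY by blast
    show "phf (\<lambda>w. p w + q w) = (\<lambda>w. phf p w + phf q w)"
      by (simp only: pq phf_lk fa_add_lk c.phi_add)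
    show "phf (fa_mult p q) = fa_mult (phf p) (phf q)"
      by (simp only: pq phf_lk fa_mult_lk c.phi_mult)
  next
    fix a :: 'k and p :: "nat list \<Rightarrow> 'k" assume "p \<in> free_alg Y"
    then obtain p' where pq: "p = lk p'" using fY by blast
    show "phf (fa_smult a p) = fa_smult a (phf p)"
      by (simp only: pq phf_lk fa_smult_lk c.phi_sm)
  qed
  define G where "G = lk ` c.G0"
  have GY: "G \<subseteq> free_alg Y" using c.G0_FY by (auto simp: G_def Y_def free_alg_lk)
  define Kf where "Kf = {p \<in> free_alg Y. phf p = (\<lambda>_. 0)}"
  have Kf_iff: "lk q \<in> Kf \<longleftrightarrow> c.FY q \<and> c.phi q = 0" for q
    by (auto simp: Kf_def Y_def free_alg_lk phf_lk fa_zero_lk)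
  have Kf_ex: "a \<in> Kf \<Longrightarrow> \<exists>a'. a = lk a' \<and> c.FY a' \<and> c.phi a' = 0" for a
  proof -
    assume a: "a \<in> Kf"
    then have "a \<in> free_alg Y" by (simp add: Kf_def)
    then obtain a' where "a = lk a'" "c.FY a'" using fY by blast
    then show ?thesis using a Kf_iff by blast
  qed
  have Kf_ideal: "two_sided_ideal Y Kf"
    unfolding two_sided_ideal_def
  proof (intro conjI ballI allI)
    show "Kf \<subseteq> free_alg Y" by (auto simp: Kf_def)
    show "(\<lambda>_. 0) \<in> Kf" unfolding fa_zero_lk Kf_iff by (simp add: c.phi_0)
  next
    fix a b :: "nat list \<Rightarrow> 'k" assume "a \<in> Kf" "b \<in> Kf"
    then obtain a' b' where ab: "a = lk a'" "c.FY a'" "c.phi a' = 0" "b = lk b'" "c.FY b'" "c.phi b' = 0"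
      using Kf_ex by blast
    have "lk (a' + b') \<in> Kf" unfolding Kf_iff using ab by (simp add: kp_add c.phi_add)
    then show "(\<lambda>w. a w + b w) \<in> Kf" unfolding ab(1,4) fa_add_lk .
  next
    fix cc :: 'k and a :: "nat list \<Rightarrow> 'k" assume "a \<in> Kf"
    then obtain a' where ab: "a = lk a'" "c.FY a'" "c.phi a' = 0"
      using Kf_ex by blast
    have "lk (sm cc a') \<in> Kf" unfolding Kf_iff using ab by (simp add: kp_sm c.phi_sm)
    then show "fa_smult cc a \<in> Kf" unfolding ab(1) fa_smult_lk .
  next
    fix a p :: "nat list \<Rightarrow> 'k" assume "a \<in> Kf" "p \<in> free_alg Y"
    obtain a' where ab: "a = lk a'" "c.FY a'" "c.phi a' = 0"
      using Kf_ex \<open>a \<in> Kf\<close> by blast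
    obtain p' where pp: "p = lk p'" "c.FY p'" using fY \<open>p \<in> free_alg Y\<close> by blast
    have "lk (a' * p') \<in> Kf" "lk (p' * a') \<in> Kf" unfolding Kf_iff using ab pp by (simp_all add: FA_mult c.phi_mult)
    then show "fa_mult a p \<in> Kf" "fa_mult p a \<in> Kf"
      unfolding ab(1) pp(1) fa_mult_lk by simp_all
  qed
  have "Kf = ideal_generated Y G"
  proof
    show "Kf \<subseteq> ideal_generated Y G"
      unfolding ideal_generated_def
    proof (rule Inter_greatest)
      fix I :: "(nat list \<Rightarrow> 'k) set" assume "I \<in> {I. two_sided_ideal Y I \<and> G \<subseteq> I}"
      then have I: "two_sided_ideal Y I" "G \<subseteq> I" by auto
      have I0: "(\<lambda>_. 0) \<in> I" and Iadd: "\<And>a b. a \<in> I \<Longrightarrow> b \<in> I \<Longrightarrow> (\<lambda>w. a w + b w) \<in> I"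
        and Ism: "\<And>cc a. a \<in> I \<Longrightarrow> fa_smult cc a \<in> I"
        and Imul: "\<And>a p. a \<in> I \<Longrightarrow> p \<in> free_alg Y \<Longrightarrow> fa_mult a p \<in> I \<and> fa_mult p a \<in> I"
        using I(1) unfolding two_sided_ideal_def by blast+
      define J where "J = {q :: (nat,'k) pm. lk q \<in> I}"
      have Jsub: "submod J"
      proof -
        have "lk 0 \<in> I" using I0 by (simp add: fa_zero_lk)
        moreover have "lk (p + q) \<in> I" if "lk p \<in> I" "lk q \<in> I" for p q :: "(nat,'k) pm"
          using Iadd[OF that] by (simp add: fa_add_lk)
        moreover have "lk (sm cc p) \<in> I" if "lk p \<in> I" for cc and p :: "(nat,'k) pm"
          using Ism[OF that, of cc] by (simp add: fa_smult_lk)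
        ultimately show ?thesis unfolding submod_def J_def by blast
      qed
      have Jl: "\<And>a p. a \<in> J \<Longrightarrow> c.FY p \<Longrightarrow> p * a \<in> J"
        using Imul by (auto simp: J_def Y_def free_alg_lk[symmetric] fa_mult_lk[symmetric])
      have Jr: "\<And>a p. a \<in> J \<Longrightarrow> c.FY p \<Longrightarrow> a * p \<in> J"
        using Imul by (auto simp: J_def Y_def free_alg_lk[symmetric] fa_mult_lk[symmetric])
      have GJ: "c.G0 \<subseteq> J" using I(2) by (auto simp: J_def G_def)
      show "Kf \<subseteq> I"
      proof
        fix p assume p: "p \<in> Kf"
        then have "p \<in> free_alg Y" by (simp add: Kf_def)
        then obtain q where q: "p = lk q" "c.FY q" using fY by blast
        then have "c.phi q = 0" using p Kf_iff by blast
        then have "q \<in> J" using c.kernel_sub[OF Jsub Jl Jr GJ q(2)] by blast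
        then show "p \<in> I" using q by (simp add: J_def)
      qed
    qed
    show "ideal_generated Y G \<subseteq> Kf"
      unfolding ideal_generated_def
    proof (rule Inter_lower, simp add: Kf_ideal)
      show "G \<subseteq> Kf" using c.G0_FY by (auto simp: G_def Kf_iff)
    qed
  qed
  then show ?thesis unfolding finitely_presented_sub_def
    using hom GY c.G0(1) by (intro exI[of _ Y] exI[of _ phf] exI[of _ G]) (auto simp: Y_def G_def Kf_def)
qed

end
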